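(* Let $f\in\mathbb{S}_d$ and let $\mathbb{V}\subseteq\mathbb{S}_d$ be a $\mathcal{T}$-invariant open set which contains the constant function $d^*(f)\mathbf{1}$. Then $\mathcal{Z}_tf\in\mathbb{V}$ for all sufficiently large real $t$.
   Context: $\mathbb{S}_d$ denotes the set of all $f\in L^\infty(\mathbb{R}^d)$ with $0\le f\le1$ almost everywhere, with the weak-* topology inherited from $L^\infty(\mathbb{R}^d)\simeq L^1(\mathbb{R}^d)^*$; $\mathbf{1}$ is the constant function $1$. For $v\in\mathbb{R}^d$, $\mathcal{T}_v\colon\mathbb{S}_d\to\mathbb{S}_d$ is $(\mathcal{T}_vf)(x)=f(x+v)$; for $t>0$, $\mathcal{Z}_t\colon\mathbb{S}_d\to\mathbb{S}_d$ is $(\mathcal{Z}_tf)(x)=f(tx)$. A set $B\subseteq\mathbb{S}_d$ is $\mathcal{T}$-invariant if $\mathcal{T}_vB=B$ for all $v\in\mathbb{R}^d$. With $m$ Lebesgue measure and $Q(v,t)$ the closed axis-parallel cube of centre $v$ and side $t$, the upper Banach density of $f\in\mathbb{S}_d$ is $d^*(f):=\limsup_{t\to\infty}\sup_{v\in\mathbb{R}^d}\frac{1}{m(Q(v,t))}\int_{Q(v,t)}f(x)\,dx$. *)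

theory Defs
  imports "HOL-Analysis.Analysis"
begin

text \<open>The set S_d: (representatives of) elements f of L-infinity(R^d) with 0 <= f <= 1 a.e.\<close>
definition Sd :: "('a::euclidean_space \<Rightarrow> real) set" where
  "Sd = {f. f \<in> borel_measurable lebesgue \<and> (AE x in lebesgue. 0 \<le> f x \<and> f x \<le> 1)}"

text \<open>The weak-* topology on S_d inherited from L-infinity = (L^1)^*: the initial topology
  of the pairings f |-> integral of f*g, g ranging over L^1(R^d).\<close>
definition weakstar :: "('a::euclidean_space \<Rightarrow> real) topology" where
  "weakstar = pullback_topology Sd
     (\<lambda>f. restrict (\<lambda>g. LINT x|lebesgue. f x * g x) {g. integrable lebesgue g})
     (product_topology (\<lambda>_. euclideanreal) {g::'a \<Rightarrow> real. integrable lebesgue g})"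

definition transl :: "'a::euclidean_space \<Rightarrow> ('a \<Rightarrow> real) \<Rightarrow> ('a \<Rightarrow> real)" where
  "transl v f = (\<lambda>x. f (x + v))"

definition dilate :: "real \<Rightarrow> ('a::euclidean_space \<Rightarrow> real) \<Rightarrow> ('a \<Rightarrow> real)" where
  "dilate t f = (\<lambda>x. f (t *\<^sub>R x))"

definition T_invariant :: "('a::euclidean_space \<Rightarrow> real) set \<Rightarrow> bool" where
  "T_invariant B \<longleftrightarrow> (\<forall>v. transl v ` B = B)"

definition cube :: "'a::euclidean_space \<Rightarrow> real \<Rightarrow> 'a set" where
  "cube v t = cbox (v - (t/2) *\<^sub>R One) (v + (t/2) *\<^sub>R One)"

definition upper_banach_density :: "('a::euclidean_space \<Rightarrow> real) \<Rightarrow> real" where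
  "upper_banach_density f = real_of_ereal (Limsup at_top (\<lambda>t::real.
      ereal (SUP v. (LINT x:cube v t|lebesgue. f x) / measure lebesgue (cube v t))))"

end

theory Submission
  imports Defs
begin


lemma cube_mem: "x \<in> cube y s \<longleftrightarrow> (\<forall>b\<in>Basis. y \<bullet> b - s/2 \<le> x \<bullet> b \<and> x \<bullet> b \<le> y \<bullet> b + s/2)"
  unfolding cube_def mem_box
  by (simp add: inner_simps)

lemma cube_sym: "x \<in> cube y s \<longleftrightarrow> y \<in> cube x s"
  unfolding cube_mem by (meson add.commute diff_le_eq le_diff_eq)

lemma cube_shift: "x \<in> cube y s \<longleftrightarrow> x - y \<in> cube 0 s"
  unfolding cube_mem by (rule ball_cong[OF refl]) (auto simp: inner_diff_left)

lemma cube_borel[measurable]: "cube y s \<in> sets borel"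
  unfolding cube_def by simp

lemma cube_sets_lborel[measurable]: "cube y s \<in> sets lborel"
  unfolding cube_def by simp

lemma emeasure_cube: "s \<ge> 0 \<Longrightarrow> emeasure lborel (cube (y::'a::euclidean_space) s) = ennreal (s ^ DIM('a))"
  unfolding cube_def emeasure_lborel_cbox_eq
  by (simp add: inner_simps prod_constant)

lemma measure_cube: "s \<ge> 0 \<Longrightarrow> measure lborel (cube (y::'a::euclidean_space) s) = s ^ DIM('a)"
  unfolding cube_def measure_lborel_cbox_eq
  by (simp add: inner_simps prod_constant)

lemma fubini_cube:
  fixes h :: "'a::euclidean_space \<Rightarrow> real"
  assumes [measurable]: "h \<in> borel_measurable borel" "E \<in> sets borel"
  shows "(\<integral>\<^sup>+y. indicator E y * (\<integral>\<^sup>+x. ennreal (h x) * indicator (cube y s) x \<partial>lborel) \<partial>lborel)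
       = (\<integral>\<^sup>+x. ennreal (h x) * emeasure lborel (E \<inter> cube x s) \<partial>lborel)"
proof -
  have ind: "indicator (cube y s) x = (indicator (cube 0 s) (x - y) :: ennreal)" for x y
    using cube_shift[of x y s] by (simp add: indicator_def)
  have ind2: "indicator (cube 0 s) (x - y) = (indicator (cube x s) y :: ennreal)" for x y
    using cube_shift[of x y s] cube_sym[of x y s] by (simp add: indicator_def)
  have m: "(\<lambda>x. ennreal (h x) * indicator (cube 0 s) (x - y)) \<in> borel_measurable lborel" for y
    by measurable
  have "(\<integral>\<^sup>+y. indicator E y * (\<integral>\<^sup>+x. ennreal (h x) * indicator (cube y s) x \<partial>lborel) \<partial>lborel)
      = (\<integral>\<^sup>+y. (\<integral>\<^sup>+x. indicator E y * (ennreal (h x) * indicator (cube 0 s) (x - y)) \<partial>lborel) \<partial>lborel)"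
    apply (rule nn_integral_cong)
    apply (subst nn_integral_cmult[OF m])
    apply (rule arg_cong[where f="\<lambda>z. _ * z"])
    apply (rule nn_integral_cong)
    apply (rule arg_cong[where f="\<lambda>z. _ * z"])
    apply (rule ind)
    done
  also have "\<dots> = (\<integral>\<^sup>+x. (\<integral>\<^sup>+y. indicator E y * (ennreal (h x) * indicator (cube 0 s) (x - y)) \<partial>lborel) \<partial>lborel)"
    apply (rule lborel_pair.Fubini')
    by measurable
  also have "\<dots> = (\<integral>\<^sup>+x. ennreal (h x) * (\<integral>\<^sup>+y. indicator (E \<inter> cube x s) y \<partial>lborel) \<partial>lborel)"
    apply (rule nn_integral_cong)
    apply (subst nn_integral_cmult[symmetric])
     apply measurable
    apply (rule nn_integral_cong)
    apply (simp only: ind2 indicator_inter_arith mult_ac)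
    done
  also have "\<dots> = (\<integral>\<^sup>+x. ennreal (h x) * emeasure lborel (E \<inter> cube x s) \<partial>lborel)"
    by simp
  finally show ?thesis .
qed

lemma cube_transfer:
  fixes h :: "'a::euclidean_space \<Rightarrow> real"
  assumes [measurable]: "h \<in> borel_measurable borel" and s: "s > 0" and \<beta>: "\<beta> \<ge> 0"
    and bound: "\<And>y. (\<integral>\<^sup>+x. ennreal (h x) * indicator (cube y s) x \<partial>lborel) \<le> ennreal (\<beta> * s ^ DIM('a))"
    and [measurable]: "A \<in> sets borel" "E \<in> sets borel"
    and sub: "\<And>x. x \<in> A \<Longrightarrow> cube x s \<subseteq> E"
  shows "(\<integral>\<^sup>+x. ennreal (h x) * indicator A x \<partial>lborel) \<le> ennreal \<beta> * emeasure lborel E"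
proof -
  let ?n = "DIM('a)"
  have "ennreal (s ^ ?n) * (\<integral>\<^sup>+x. ennreal (h x) * indicator A x \<partial>lborel)
      = (\<integral>\<^sup>+x. ennreal (h x) * (indicator A x * ennreal (s ^ ?n)) \<partial>lborel)"
    by (subst nn_integral_cmult[symmetric]) (auto intro!: nn_integral_cong simp: mult_ac)
  also have "\<dots> \<le> (\<integral>\<^sup>+x. ennreal (h x) * emeasure lborel (E \<inter> cube x s) \<partial>lborel)"
  proof (rule nn_integral_mono)
    fix x
    show "ennreal (h x) * (indicator A x * ennreal (s ^ ?n)) \<le> ennreal (h x) * emeasure lborel (E \<inter> cube x s)"
    proof (cases "x \<in> A")
      case True
      then have "E \<inter> cube x s = cube x s" using sub by auto
      then show ?thesis using True s by (simp add: emeasure_cube)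
    qed simp
  qed
  also have "\<dots> = (\<integral>\<^sup>+y. indicator E y * (\<integral>\<^sup>+x. ennreal (h x) * indicator (cube y s) x \<partial>lborel) \<partial>lborel)"
    by (rule fubini_cube[symmetric]) auto
  also have "\<dots> \<le> (\<integral>\<^sup>+y. ennreal (\<beta> * s ^ ?n) * indicator E y \<partial>lborel)"
    apply (rule nn_integral_mono)
    subgoal for y using bound[of y] by (cases "y \<in> E") (simp_all add: mult.commute)
    done
  also have "\<dots> = ennreal (s ^ ?n) * (ennreal \<beta> * emeasure lborel E)"
    using s \<beta> by (subst nn_integral_cmult_indicator) (auto simp: ennreal_mult mult_ac)
  finally show ?thesis
    using s by (subst (asm) ennreal_mult_le_mult_iff) auto
qed



definition nb :: "'a::euclidean_space set \<Rightarrow> real \<Rightarrow> 'a set" where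
  "nb C s = {x + y | x y. x \<in> C \<and> y \<in> cube 0 s}"

lemma compact_cube: "compact (cube y s)"
  unfolding cube_def by simp

lemma compact_nb: "compact C \<Longrightarrow> compact (nb C s)"
  unfolding nb_def by (rule compact_sums) (auto simp: compact_cube)

lemma cube_sub_nb: "x \<in> C \<Longrightarrow> cube x s \<subseteq> nb C s"
  unfolding nb_def
proof clarify
  fix z assume "x \<in> C" "z \<in> cube x s"
  then show "\<exists>a b. z = a + b \<and> a \<in> C \<and> b \<in> cube 0 s"
    by (intro exI[of _ x] exI[of _ "z - x"]) (auto simp: cube_shift[symmetric])
qed

lemma cube_mono: assumes "s \<le> s'" shows "cube y s \<subseteq> cube y s'"
proof
  fix x assume "x \<in> cube y s"
  then show "x \<in> cube y s'" unfolding cube_mem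
    apply (intro ballI)
    apply (drule bspec, assumption)
    using assms by linarith
qed

lemma nb_mono: "s \<le> s' \<Longrightarrow> nb C s \<subseteq> nb C s'"
  unfolding nb_def using cube_mono[of s s' 0] by blast

lemma center_in_cube: "s \<ge> 0 \<Longrightarrow> y \<in> cube y s"
  unfolding cube_mem by auto

lemma sub_nb: "s \<ge> 0 \<Longrightarrow> C \<subseteq> nb C s"
  using cube_sub_nb center_in_cube by blast

lemma nb_small:
  fixes C :: "'a::euclidean_space set"
  assumes C: "compact C" and e: "e > 0"
  shows "\<exists>s>0. measure lborel (nb C s) \<le> measure lborel C + e"
proof -
  define S where "S m = nb C (1 / (Suc m))" for m :: nat
  have Sc: "compact (S m)" for m unfolding S_def using C by (rule compact_nb)
  have dec: "decseq S"
    unfolding decseq_def S_def by (intro allI impI nb_mono divide_left_mono) auto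
  have inter: "(\<Inter>m. S m) = C"
  proof
    show "C \<subseteq> (\<Inter>m. S m)" unfolding S_def by (intro INT_greatest sub_nb) simp
    show "(\<Inter>m. S m) \<subseteq> C"
    proof
      fix z assume z: "z \<in> (\<Inter>m. S m)"
      show "z \<in> C"
      proof (rule ccontr)
        assume "z \<notin> C"
        moreover have "open (- C)" using C compact_imp_closed by blast
        ultimately obtain r where r0: "r > 0" and rsub: "ball z r \<subseteq> - C"
          using open_contains_ball_eq by blast
        then have r: "r > 0" "ball z r \<inter> C = {}" by auto
        obtain m0 :: nat where "real DIM('a) / r < m0"
          using reals_Archimedean2 by blast
        then have m: "real DIM('a) / r < Suc m0" by simp
        from z have "z \<in> S m0" by auto
        then obtain x y where xy: "z = x + y" "x \<in> C" "y \<in> cube 0 (1 / Suc m0)"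
          unfolding S_def nb_def by auto
        have "norm y \<le> (\<Sum>b\<in>Basis. \<bar>y \<bullet> b\<bar>)" by (rule norm_le_l1)
        also have "\<dots> \<le> (\<Sum>b\<in>(Basis::'a set). 1 / Suc m0)"
        proof (rule sum_mono)
          fix b :: 'a assume b: "b \<in> Basis"
          have "0 \<bullet> b - (1 / Suc m0) / 2 \<le> y \<bullet> b \<and> y \<bullet> b \<le> 0 \<bullet> b + (1 / Suc m0) / 2"
            using xy(3) b unfolding cube_mem by blast
          then have A: "- ((1 / Suc m0) / 2) \<le> y \<bullet> b \<and> y \<bullet> b \<le> (1 / Suc m0) / 2" by simp
          have B: "(1 / real (Suc m0)) / 2 \<le> 1 / Suc m0" by (simp add: field_simps)
          show "\<bar>y \<bullet> b\<bar> \<le> 1 / Suc m0" unfolding abs_le_iff using A B by (intro conjI; linarith)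
        qed
        also have "\<dots> = DIM('a) / Suc m0" by simp
        also have "\<dots> < r" using m r by (simp add: field_simps)
        finally have "x \<in> ball z r" using xy by (simp add: dist_norm)
        with r xy show False by blast
      qed
    qed
  qed
  have fin: "emeasure lborel (S m) \<noteq> \<infinity>" for m
    using emeasure_compact_finite[OF Sc[of m]] by simp
  have "(\<lambda>m. measure lborel (S m)) \<longlonglongrightarrow> measure lborel (\<Inter>m. S m)"
    by (rule Lim_measure_decseq) (use Sc dec fin in \<open>auto intro: borel_compact\<close>)
  then have "(\<lambda>m. measure lborel (S m)) \<longlonglongrightarrow> measure lborel C" by (simp add: inter)
  then have "eventually (\<lambda>m. measure lborel (S m) < measure lborel C + e) sequentially"
    using e by (intro order_tendstoD) auto
  then obtain m where "measure lborel (S m) < measure lborel C + e"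
    by (auto dest: eventually_happens)
  then show ?thesis unfolding S_def by (intro exI[of _ "1 / Suc m"]) auto
qed



locale unitf =
  fixes h :: "'a::euclidean_space \<Rightarrow> real"
  assumes hb[measurable]: "h \<in> borel_measurable borel"
    and h0: "\<And>x. 0 \<le> h x" and h1: "\<And>x. h x \<le> 1"
begin

lemma hleb[measurable]: "h \<in> borel_measurable lebesgue"
  using hb by (simp add: measurable_completion)

lemma si_int: "E \<in> sets lebesgue \<Longrightarrow> emeasure lebesgue E < \<infinity> \<Longrightarrow> set_integrable lebesgue E h"
  unfolding set_integrable_def
  by (rule integrableI_bounded_set_indicator[where B=1]) (auto simp: h0 h1 abs_le_iff intro: order_trans[OF _ h1])

lemma si_nonneg: "0 \<le> (LINT x:E|lebesgue. h x)"
  unfolding set_lebesgue_integral_def by (rule integral_nonneg_AE) (auto simp: h0)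

lemma si_le: assumes "E \<in> sets lebesgue" "emeasure lebesgue E < \<infinity>"
  shows "(LINT x:E|lebesgue. h x) \<le> measure lebesgue E"
proof -
  have "(LINT x:E|lebesgue. h x) \<le> (LINT x:E|lebesgue. 1)"
    by (rule set_integral_mono) (use assms si_int h1 in \<open>auto simp: set_integrable_def\<close>)
  also have "\<dots> = measure lebesgue E"
    using assms by (subst set_integral_const) auto
  finally show ?thesis .
qed

lemma si_add: assumes "E \<in> sets lebesgue" "emeasure lebesgue E < \<infinity>" "F \<in> sets lebesgue" "emeasure lebesgue F < \<infinity>" "E \<inter> F = {}"
  shows "(LINT x:E \<union> F|lebesgue. h x) = (LINT x:E|lebesgue. h x) + (LINT x:F|lebesgue. h x)"
  by (rule set_integral_Un) (use assms si_int in auto)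

lemma si_diff: assumes "F \<in> sets lebesgue" "emeasure lebesgue F < \<infinity>" "E \<in> sets lebesgue" "E \<subseteq> F"
  shows "(LINT x:F|lebesgue. h x) = (LINT x:E|lebesgue. h x) + (LINT x:F - E|lebesgue. h x)"
proof -
  have fE: "emeasure lebesgue E < \<infinity>" using assms emeasure_mono[of E F lebesgue] by (meson le_less_trans)
  have fD: "emeasure lebesgue (F - E) < \<infinity>" using assms emeasure_mono[of "F - E" F lebesgue] by (meson Diff_subset le_less_trans)
  have "F = E \<union> (F - E)" using assms by auto
  then show ?thesis using si_add[of E "F - E"] assms fE fD by auto
qed

lemma si_mono: assumes "F \<in> sets lebesgue" "emeasure lebesgue F < \<infinity>" "E \<in> sets lebesgue" "E \<subseteq> F"
  shows "(LINT x:E|lebesgue. h x) \<le> (LINT x:F|lebesgue. h x)"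
  using si_diff[OF assms] si_nonneg[of "F - E"] by linarith

lemma si_nn: assumes [measurable]: "E \<in> sets borel" and fin: "emeasure lborel E < \<infinity>"
  shows "(\<integral>\<^sup>+x. ennreal (h x) * indicator E x \<partial>lborel) = ennreal (LINT x:E|lebesgue. h x)"
proof -
  have int: "integrable lborel (\<lambda>x. indicator E x *\<^sub>R h x)"
    by (rule integrableI_bounded_set_indicator[where B=1]) (use fin h0 h1 in \<open>auto simp: abs_le_iff intro: order_trans[OF _ h1]\<close>)
  have "(LINT x:E|lebesgue. h x) = (LINT x:E|lborel. h x)"
    unfolding set_lebesgue_integral_def by (rule integral_completion) measurable
  moreover have "(\<integral>\<^sup>+x. ennreal (h x) * indicator E x \<partial>lborel) = (\<integral>\<^sup>+x. ennreal (indicator E x *\<^sub>R h x) \<partial>lborel)"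
    by (rule nn_integral_cong) (auto simp: indicator_def)
  moreover have "\<dots> = ennreal (LINT x:E|lborel. h x)"
    unfolding set_lebesgue_integral_def by (rule nn_integral_eq_integral[OF int]) (auto simp: h0)
  ultimately show ?thesis by simp
qed

lemma transfer_real:
  assumes s: "s > 0" and \<beta>: "\<beta> \<ge> 0"
    and bound: "\<And>y. (LINT x:cube y s|lebesgue. h x) \<le> \<beta> * s ^ DIM('a)"
    and [measurable]: "A \<in> sets borel" "E \<in> sets borel" and finE: "emeasure lborel E < \<infinity>"
    and sub: "\<And>x. x \<in> A \<Longrightarrow> cube x s \<subseteq> E"
  shows "(LINT x:A|lebesgue. h x) \<le> \<beta> * measure lborel E"
proof -
  have AE: "A \<subseteq> E"
    using sub center_in_cube[of s] s by fastforce
  have finA: "emeasure lborel A < \<infinity>"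
    using finE emeasure_mono[OF AE, of lborel] by (auto intro: le_less_trans)
  have finC: "emeasure lborel (cube y s) < \<infinity>" for y
    using s by (simp add: emeasure_cube)
  have "ennreal (LINT x:A|lebesgue. h x) = (\<integral>\<^sup>+x. ennreal (h x) * indicator A x \<partial>lborel)"
    using si_nn[of A] finA by simp
  also have "\<dots> \<le> ennreal \<beta> * emeasure lborel E"
  proof (rule cube_transfer[OF hb s \<beta>])
    fix y
    show "(\<integral>\<^sup>+x. ennreal (h x) * indicator (cube y s) x \<partial>lborel) \<le> ennreal (\<beta> * s ^ DIM('a))"
      using si_nn[of "cube y s"] finC[of y] bound[of y] by (simp add: ennreal_leI)
  qed (use sub in auto)
  also have "\<dots> = ennreal (\<beta> * measure lborel E)"
    using finE \<beta> by (simp add: emeasure_eq_ennreal_measure ennreal_mult)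
  finally show ?thesis
    using \<beta> by (subst (asm) ennreal_le_iff) (auto intro: mult_nonneg_nonneg)
qed

end



lemma compact_fmeasurable: "compact C \<Longrightarrow> C \<in> fmeasurable lborel"
  unfolding fmeasurable_def using emeasure_compact_finite borel_compact by auto

lemma cube_in_box:
  assumes "L0 \<ge> 0"
  shows "cube 0 L0 \<subseteq> box (-(L0/2+1) *\<^sub>R One) ((L0/2+1) *\<^sub>R (One::'a::euclidean_space))"
    "box (-(L0/2+1) *\<^sub>R One) ((L0/2+1) *\<^sub>R (One::'a::euclidean_space)) \<subseteq> cube 0 (L0+2)"
proof -
  show "cube 0 L0 \<subseteq> box (-(L0/2+1) *\<^sub>R One) ((L0/2+1) *\<^sub>R (One::'a::euclidean_space))"
  proof
    fix x :: 'a assume "x \<in> cube 0 L0"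
    then have "\<forall>b\<in>Basis. - (L0/2) \<le> x \<bullet> b \<and> x \<bullet> b \<le> L0/2" unfolding cube_mem by simp
    then show "x \<in> box (-(L0/2+1) *\<^sub>R One) ((L0/2+1) *\<^sub>R One)"
      unfolding mem_box by (auto simp: inner_simps)
  qed
  show "box (-(L0/2+1) *\<^sub>R One) ((L0/2+1) *\<^sub>R (One::'a::euclidean_space)) \<subseteq> cube 0 (L0+2)"
  proof
    fix x :: 'a assume "x \<in> box (-(L0/2+1) *\<^sub>R One) ((L0/2+1) *\<^sub>R One)"
    then have H: "\<forall>b\<in>Basis. - (L0/2+1) < x \<bullet> b \<and> x \<bullet> b < L0/2+1" unfolding mem_box by (simp add: inner_simps)
    show "x \<in> cube 0 (L0+2)"
      unfolding cube_mem
    proof (intro ballI)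
      fix b :: 'a assume b: "b \<in> Basis"
      then have x1: "- (L0/2+1) < x \<bullet> b" and x2: "x \<bullet> b < L0/2+1" using H by auto
      have e: "(L0 + 2) / 2 = L0/2 + 1" by simp
      show "0 \<bullet> b - (L0 + 2) / 2 \<le> x \<bullet> b \<and> x \<bullet> b \<le> 0 \<bullet> b + (L0 + 2) / 2"
        unfolding inner_zero_left e using x1 x2 by (intro conjI; linarith)
    qed
  qed
qed

lemma lmeas_measure_less:
  assumes "X \<in> lmeasurable" "emeasure lebesgue X < ennreal e"
  shows "measure lebesgue X < e"
  using assms by (metis emeasure_eq_ennreal_measure ennreal_less_iff fmeasurable_def less_top mem_Collect_eq order_less_imp_le ennreal_less_zero_iff measure_nonneg not_less)

lemma base_bounded:
  fixes A :: "'a::euclidean_space set"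
  assumes c0: "0 \<le> c" and c1: "c \<le> 1" and A: "A \<in> sets lebesgue" and AL: "A \<subseteq> cube 0 L0"
    and L00: "L0 \<ge> 0" and \<eta>: "\<eta> > 0" and \<eta>1: "\<eta> \<le> 1"
  shows "\<exists>L1. \<forall>L\<ge>L1. \<exists>\<delta>>0. \<exists>s>0. \<forall>h::'a\<Rightarrow>real. unitf h \<and> (\<forall>y. (LINT x:cube y s|lebesgue. h x) \<le> (c+\<delta>)* s ^ DIM('a))
     \<and> (c-\<delta>)* L ^ DIM('a) \<le> (LINT x:cube 0 L|lebesgue. h x) \<longrightarrow>
     \<bar>(LINT x:A|lebesgue. h x) - c * measure lebesgue A\<bar> \<le> 5*\<eta>"
proof -
  let ?n = "DIM('a)"
  obtain K where Kc: "closed K" and KA: "K \<subseteq> A" and AK: "A - K \<in> lmeasurable" "emeasure lebesgue (A - K) < ennreal \<eta>"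
    using sets_lebesgue_inner_closed[OF A \<eta>] by blast
  obtain U0 where U0o: "open U0" and AU0: "A \<subseteq> U0" and UA0: "U0 - A \<in> lmeasurable" "emeasure lebesgue (U0 - A) < ennreal \<eta>"
    using sets_lebesgue_outer_open[OF A \<eta>] by blast
  define Ub where "Ub = box (-(L0/2+1) *\<^sub>R One) ((L0/2+1) *\<^sub>R (One::'a))"
  define U where "U = U0 \<inter> Ub"
  have Uo: "open U" unfolding U_def Ub_def using U0o by auto
  have AU: "A \<subseteq> U" unfolding U_def Ub_def using AU0 AL cube_in_box(1)[OF L00] by blast
  have UL: "U \<subseteq> cube 0 (L0+2)" unfolding U_def Ub_def using cube_in_box(2)[OF L00] by blast
  have Kcomp: "compact K"
    using Kc KA AL bounded_subset[of "cube 0 L0" K] unfolding cube_def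
    by (meson bounded_cbox compact_eq_bounded_closed order_trans)
  have Abnd: "bounded A" using AL unfolding cube_def by (meson bounded_cbox bounded_subset)
  have Ubnd: "bounded U" using UL unfolding cube_def by (meson bounded_cbox bounded_subset)
  have Alm: "A \<in> lmeasurable" using Abnd A by (rule bounded_set_imp_lmeasurable)
  have Ulm: "U \<in> lmeasurable" using Ubnd Uo by (intro bounded_set_imp_lmeasurable) auto
  have Klm: "K \<in> lmeasurable" using Kcomp by (rule lmeasurable_compact)
  have mAK: "measure lebesgue (A - K) < \<eta>" using AK by (rule lmeas_measure_less)
  have mUA0: "measure lebesgue (U0 - A) < \<eta>" using UA0 by (rule lmeas_measure_less)
  have mUA: "measure lebesgue (U - A) < \<eta>"
  proof -
    have "measure lebesgue (U - A) \<le> measure lebesgue (U0 - A)"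
      by (rule measure_mono_fmeasurable) (use UA0 Ulm Alm in \<open>auto simp: U_def\<close>)
    then show ?thesis using mUA0 by linarith
  qed
  have mA_K: "measure lebesgue A = measure lebesgue K + measure lebesgue (A - K)"
    using measure_Diff[of lebesgue A K] Alm Klm KA by (auto simp: fmeasurable_def)
  have mU_A: "measure lebesgue U = measure lebesgue A + measure lebesgue (U - A)"
    using measure_Diff[of lebesgue U A] Alm Ulm AU by (auto simp: fmeasurable_def)
  have mAKnn: "0 \<le> measure lebesgue (A - K)" by simp
  have mUAnn: "0 \<le> measure lebesgue (U - A)" by simp
  show ?thesis
  proof (rule exI[of _ "L0+2"], intro allI impI)
    fix L assume L: "L0 + 2 \<le> L"
    define B where "B = cube (0::'a) L"
    have L0': "L \<ge> 0" using L L00 by linarith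
    have UB: "U \<subseteq> B" unfolding B_def using UL cube_mono[of "L0+2" L 0] L by blast
    have KB: "K \<subseteq> B" using KA AU UB by blast
    have Bcomp: "compact B" unfolding B_def by (rule compact_cube)
    have C2comp: "compact (B - U)"
      using Bcomp Uo by (simp add: Diff_eq compact_Int_closed open_closed)
    obtain s1 where s1: "s1 > 0" "measure lborel (nb K s1) \<le> measure lborel K + \<eta>"
      using nb_small[OF Kcomp \<eta>] by blast
    obtain s2 where s2: "s2 > 0" "measure lborel (nb (B - U) s2) \<le> measure lborel (B - U) + \<eta>"
      using nb_small[OF C2comp \<eta>] by blast
    define s where "s = min s1 s2"
    define \<delta> where "\<delta> = min 1 (\<eta> / (L ^ ?n + 1))"
    have s0: "s > 0" unfolding s_def using s1 s2 by simp
    have Lpos: "L ^ ?n + 1 > 0" using L0' by (intro add_nonneg_pos zero_le_power) auto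
    have d0: "\<delta> > 0" unfolding \<delta>_def using \<eta> Lpos by simp
    have d1: "\<delta> \<le> 1" unfolding \<delta>_def by simp
    have dL: "\<delta> * (L ^ ?n + 1) \<le> \<eta>"
    proof -
      have "\<delta> * (L ^ ?n + 1) \<le> (\<eta> / (L ^ ?n + 1)) * (L ^ ?n + 1)"
        unfolding \<delta>_def by (rule mult_right_mono) (use Lpos in auto)
      then show ?thesis using Lpos by simp
    qed
    have nK: "measure lborel (nb K s) \<le> measure lborel K + \<eta>"
    proof -
      have "measure lborel (nb K s) \<le> measure lborel (nb K s1)"
        by (rule measure_mono_fmeasurable[OF nb_mono]) (auto simp: s_def intro: compact_fmeasurable compact_nb Kcomp borel_compact)
      then show ?thesis using s1(2) by linarith
    qed
    have nC: "measure lborel (nb (B - U) s) \<le> measure lborel (B - U) + \<eta>"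
    proof -
      have "measure lborel (nb (B - U) s) \<le> measure lborel (nb (B - U) s2)"
        by (rule measure_mono_fmeasurable[OF nb_mono]) (auto simp: s_def intro: compact_fmeasurable compact_nb C2comp borel_compact)
      then show ?thesis using s2(2) by linarith
    qed
    show "\<exists>\<delta>>0. \<exists>s>0. \<forall>h::'a\<Rightarrow>real. unitf h \<and> (\<forall>y. (LINT x:cube y s|lebesgue. h x) \<le> (c+\<delta>)* s ^ ?n)
     \<and> (c-\<delta>)* L ^ ?n \<le> (LINT x:cube 0 L|lebesgue. h x) \<longrightarrow>
     \<bar>(LINT x:A|lebesgue. h x) - c * measure lebesgue A\<bar> \<le> 5*\<eta>"
    proof (rule exI[of _ \<delta>], intro conjI d0, rule exI[of _ s], intro conjI s0 allI impI)
      fix h :: "'a \<Rightarrow> real" assume H: "unitf h \<and> (\<forall>y. (LINT x:cube y s|lebesgue. h x) \<le> (c+\<delta>)* s ^ ?n)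
     \<and> (c-\<delta>)* L ^ ?n \<le> (LINT x:cube 0 L|lebesgue. h x)"
      then interpret unitf h by blast
      have bnd: "\<And>y. (LINT x:cube y s|lebesgue. h x) \<le> (c+\<delta>)* s ^ ?n" using H by blast
      have IB: "(c-\<delta>)* L ^ ?n \<le> (LINT x:B|lebesgue. h x)" using H B_def by blast
      have cd0: "c + \<delta> \<ge> 0" using c0 d0 by simp
      have IK: "(LINT x:K|lebesgue. h x) \<le> (c+\<delta>) * measure lborel (nb K s)"
        by (rule transfer_real[OF s0 cd0 bnd _ _ _ cube_sub_nb])
           (use Kc Kcomp compact_nb emeasure_compact_finite in \<open>auto intro: borel_compact\<close>)
      have IAK: "(LINT x:A|lebesgue. h x) = (LINT x:K|lebesgue. h x) + (LINT x:A - K|lebesgue. h x)"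
        by (rule si_diff) (use Alm Klm KA in \<open>auto simp: fmeasurable_def\<close>)
      have IAK2: "(LINT x:A - K|lebesgue. h x) \<le> measure lebesgue (A - K)"
        by (rule si_le) (use AK in \<open>auto simp: fmeasurable_def\<close>)
      have mK: "measure lebesgue K = measure lborel K" using Kc by simp
      have mKB: "measure lborel K \<le> L ^ ?n"
      proof -
        have "measure lborel K \<le> measure lborel B"
          by (rule measure_mono_fmeasurable) (use KB Kc Bcomp compact_fmeasurable in auto)
        then show ?thesis unfolding B_def using measure_cube[OF L0', of "0::'a"] by simp
      qed
      have u1: "(c+\<delta>) * measure lborel (nb K s) \<le> (c+\<delta>) * (measure lborel K + \<eta>)"
        by (rule mult_left_mono[OF nK cd0])
      have u2: "c * measure lborel K \<le> c * measure lebesgue A"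
        using mA_K mK mAKnn c0 by (simp add: mult_left_mono)
      have u3: "c * \<eta> \<le> \<eta>" using c1 \<eta> by (simp add: mult_left_le_one_le c0)
      have u4: "\<delta> * measure lborel K \<le> \<delta> * L ^ ?n" using mKB d0 by (simp add: mult_left_mono)
      have u5: "\<delta> * \<eta> \<le> \<delta>" using \<eta>1 d0 by (simp add: mult_left_le)
      have u6: "(c+\<delta>) * (measure lborel K + \<eta>) = c * measure lborel K + c * \<eta> + \<delta> * measure lborel K + \<delta> * \<eta>"
        by (simp add: algebra_simps)
      have u7: "\<delta> * (L ^ ?n + 1) = \<delta> * L ^ ?n + \<delta>" by (simp add: algebra_simps)
      have upper: "(LINT x:A|lebesgue. h x) - c * measure lebesgue A \<le> 5*\<eta>"
        using IK IAK IAK2 mAK u1 u2 u3 u4 u5 u6 u7 dL \<eta> by linarith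
      have IC: "(LINT x:B - U|lebesgue. h x) \<le> (c+\<delta>) * measure lborel (nb (B - U) s)"
        by (rule transfer_real[OF s0 cd0 bnd _ _ _ cube_sub_nb])
           (use C2comp compact_nb emeasure_compact_finite in \<open>auto intro: borel_compact\<close>)
      have IBU: "(LINT x:B|lebesgue. h x) = (LINT x:U|lebesgue. h x) + (LINT x:B - U|lebesgue. h x)"
        using lmeasurable_compact[OF Bcomp] by (intro si_diff) (use UB Uo in \<open>auto simp: fmeasurable_def\<close>)
      have IUA: "(LINT x:U|lebesgue. h x) = (LINT x:A|lebesgue. h x) + (LINT x:U - A|lebesgue. h x)"
        by (rule si_diff) (use Alm Ulm AU in \<open>auto simp: fmeasurable_def\<close>)
      have IUA2: "(LINT x:U - A|lebesgue. h x) \<le> measure lebesgue (U - A)"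
        using fmeasurable_Diff[OF Ulm, of A] Alm by (intro si_le) (auto simp: fmeasurable_def)
      have mC: "measure lborel (B - U) = L ^ ?n - measure lebesgue U"
      proof -
        have "measure lborel (B - U) = measure lborel B - measure lborel U"
          using emeasure_compact_finite[OF Bcomp] borel_compact[OF Bcomp] by (intro measure_Diff) (use UB Uo in auto)
        then show ?thesis unfolding B_def using measure_cube[OF L0', of "0::'a"] Uo by simp
      qed
      have l1: "(c+\<delta>) * measure lborel (nb (B - U) s) \<le> (c+\<delta>) * (L ^ ?n - measure lebesgue U + \<eta>)"
        using mult_left_mono[OF nC cd0] mC by simp
      have l2: "c * measure lebesgue A \<le> c * measure lebesgue U"
        using mU_A mUAnn c0 by (simp add: mult_left_mono)
      have l3: "\<delta> * L ^ ?n \<le> \<eta>" using dL d0 by (simp add: algebra_simps)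
      have l4: "0 \<le> \<delta> * measure lebesgue U" using d0 by simp
      have l5: "(c+\<delta>) * (L ^ ?n - measure lebesgue U + \<eta>) = c * L ^ ?n - c * measure lebesgue U + c * \<eta> + \<delta> * L ^ ?n - \<delta> * measure lebesgue U + \<delta> * \<eta>"
        by (simp add: algebra_simps)
      have l6: "(c-\<delta>) * L ^ ?n = c * L ^ ?n - \<delta> * L ^ ?n" by (simp add: algebra_simps)
      have lower: "c * measure lebesgue A - 5*\<eta> \<le> (LINT x:A|lebesgue. h x)"
        using IB IC IBU IUA IUA2 mUA l1 l2 l3 l4 l5 l6 u3 u5 u7 dL d1 \<eta> d0 L0' by (smt (verit) zero_le_power mult_nonneg_nonneg)
      show "\<bar>(LINT x:A|lebesgue. h x) - c * measure lebesgue A\<bar> \<le> 5*\<eta>"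
        using upper lower by linarith
    qed
  qed
qed



definition Hyp :: "real \<Rightarrow> ('a::euclidean_space \<Rightarrow> real) \<Rightarrow> real \<Rightarrow> real \<Rightarrow> real \<Rightarrow> bool" where
  "Hyp c h L \<delta> s \<longleftrightarrow> unitf h \<and> L \<ge> 0 \<and>
     (\<forall>y. \<forall>\<sigma>\<ge>s. (LINT x:cube y \<sigma>|lebesgue. h x) \<le> (c+\<delta>) * \<sigma> ^ DIM('a)) \<and>
     (c-\<delta>) * L ^ DIM('a) \<le> (LINT x:cube 0 L|lebesgue. h x)"

definition PP :: "real \<Rightarrow> ('a::euclidean_space \<Rightarrow> real) \<Rightarrow> bool" where
  "PP c g \<longleftrightarrow> (\<forall>\<epsilon>>0. \<exists>L0. \<forall>L\<ge>L0. \<exists>\<delta>>0. \<exists>s>0. \<forall>h. Hyp c h L \<delta> s \<longrightarrow>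
      \<bar>(\<integral>x. h x * g x \<partial>lebesgue) - (\<integral>x. c * g x \<partial>lebesgue)\<bar> \<le> \<epsilon>)"

lemma Hyp_mono:
  assumes "Hyp c h L \<delta> s" "\<delta> \<le> \<delta>'" "s \<le> s'" "s > 0"
  shows "Hyp c h L \<delta>' s'"
proof -
  have H: "unitf h" "L \<ge> 0" "\<And>y \<sigma>. \<sigma> \<ge> s \<Longrightarrow> (LINT x:cube y \<sigma>|lebesgue. h x) \<le> (c+\<delta>) * \<sigma> ^ DIM('a)"
    "(c-\<delta>) * L ^ DIM('a) \<le> (LINT x:cube 0 L|lebesgue. h x)"
    using assms(1) unfolding Hyp_def by auto
  have 1: "(LINT x:cube y \<sigma>|lebesgue. h x) \<le> (c+\<delta>') * \<sigma> ^ DIM('a)" if "\<sigma> \<ge> s'" for y \<sigma>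
  proof -
    have "(LINT x:cube y \<sigma>|lebesgue. h x) \<le> (c+\<delta>) * \<sigma> ^ DIM('a)" using H(3) that assms(3) by auto
    also have "\<dots> \<le> (c+\<delta>') * \<sigma> ^ DIM('a)"
      using assms that by (intro mult_right_mono) auto
    finally show ?thesis .
  qed
  have 2: "(c-\<delta>') * L ^ DIM('a) \<le> (LINT x:cube 0 L|lebesgue. h x)"
  proof -
    have "(c-\<delta>') * L ^ DIM('a) \<le> (c-\<delta>) * L ^ DIM('a)"
      using assms H(2) by (intro mult_right_mono) auto
    then show ?thesis using H(4) by linarith
  qed
  show ?thesis unfolding Hyp_def using H 1 2 by auto
qed

lemma hc_bound:
  assumes "unitf h" "0 \<le> c" "c \<le> 1"
  shows "\<bar>h x - c\<bar> \<le> 1"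
  using assms unitf.h0[OF assms(1), of x] unitf.h1[OF assms(1), of x] by auto

lemma int_hg:
  assumes "unitf h" "integrable lebesgue g"
  shows "integrable lebesgue (\<lambda>x. h x * g x)"
proof (rule Bochner_Integration.integrable_bound[OF assms(2)])
  show "(\<lambda>x. h x * g x) \<in> borel_measurable lebesgue"
    using unitf.hleb[OF assms(1)] borel_measurable_integrable[OF assms(2)] by measurable
  show "AE x in lebesgue. norm (h x * g x) \<le> norm (g x)"
    using unitf.h0[OF assms(1)] unitf.h1[OF assms(1)]
    by (auto simp: abs_mult intro!: mult_left_le_one_le)
qed

lemma diff_bound:
  assumes h: "unitf h" and c: "0 \<le> c" "c \<le> 1" and g: "integrable lebesgue g" and g': "integrable lebesgue g'"
  shows "\<bar>((\<integral>x. h x * g x \<partial>lebesgue) - (\<integral>x. c * g x \<partial>lebesgue))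
         - ((\<integral>x. h x * g' x \<partial>lebesgue) - (\<integral>x. c * g' x \<partial>lebesgue))\<bar>
         \<le> (\<integral>x. \<bar>g x - g' x\<bar> \<partial>lebesgue)"
proof -
  have i1: "integrable lebesgue (\<lambda>x. h x * g x)" using int_hg[OF h g] .
  have i2: "integrable lebesgue (\<lambda>x. h x * g' x)" using int_hg[OF h g'] .
  have "((\<integral>x. h x * g x \<partial>lebesgue) - (\<integral>x. c * g x \<partial>lebesgue))
         - ((\<integral>x. h x * g' x \<partial>lebesgue) - (\<integral>x. c * g' x \<partial>lebesgue))
       = (\<integral>x. (h x * g x - c * g x) - (h x * g' x - c * g' x) \<partial>lebesgue)"
    using i1 i2 g g' by (simp add: integral_diff)
  also have "\<dots> = (\<integral>x. (h x - c) * (g x - g' x) \<partial>lebesgue)"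
    by (rule Bochner_Integration.integral_cong) (auto simp: algebra_simps)
  finally have eq: "((\<integral>x. h x * g x \<partial>lebesgue) - (\<integral>x. c * g x \<partial>lebesgue))
         - ((\<integral>x. h x * g' x \<partial>lebesgue) - (\<integral>x. c * g' x \<partial>lebesgue))
       = (\<integral>x. (h x - c) * (g x - g' x) \<partial>lebesgue)" .
  have "\<bar>\<integral>x. (h x - c) * (g x - g' x) \<partial>lebesgue\<bar> \<le> (\<integral>x. \<bar>(h x - c) * (g x - g' x)\<bar> \<partial>lebesgue)"
    by (rule integral_abs_bound)
  also have "\<dots> \<le> (\<integral>x. \<bar>g x - g' x\<bar> \<partial>lebesgue)"
  proof (rule integral_mono)
    have ihc: "integrable lebesgue (\<lambda>x. (h x - c) * (g x - g' x))"
      using i1 i2 g g' by (simp add: algebra_simps)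
    show "integrable lebesgue (\<lambda>x. \<bar>(h x - c) * (g x - g' x)\<bar>)"
      using ihc by (rule integrable_abs)
    show "integrable lebesgue (\<lambda>x. \<bar>g x - g' x\<bar>)" using g g' by auto
    fix x
    show "\<bar>(h x - c) * (g x - g' x)\<bar> \<le> \<bar>g x - g' x\<bar>"
      using hc_bound[OF h c, of x] by (simp add: abs_mult mult_left_le_one_le)
  qed
  finally show ?thesis unfolding eq .
qed



lemma PP_approx:
  fixes g :: "'a::euclidean_space \<Rightarrow> real"
  assumes c: "0 \<le> c" "c \<le> 1" and g: "integrable lebesgue g"
    and ap: "\<And>e. e > 0 \<Longrightarrow> \<exists>g'. integrable lebesgue g' \<and> PP c g' \<and> (\<integral>x. \<bar>g x - g' x\<bar> \<partial>lebesgue) \<le> e"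
  shows "PP c g"
  unfolding PP_def
proof (intro allI impI)
  fix \<epsilon> :: real assume e: "\<epsilon> > 0"
  obtain g' where g': "integrable lebesgue g'" "PP c g'" "(\<integral>x. \<bar>g x - g' x\<bar> \<partial>lebesgue) \<le> \<epsilon>/2"
    using ap[of "\<epsilon>/2"] e by auto
  obtain L0 where L0: "\<forall>L\<ge>L0. \<exists>\<delta>>0. \<exists>s>0. \<forall>h::'a\<Rightarrow>real. Hyp c h L \<delta> s \<longrightarrow>
      \<bar>(\<integral>x. h x * g' x \<partial>lebesgue) - (\<integral>x. c * g' x \<partial>lebesgue)\<bar> \<le> \<epsilon>/2"
    using g'(2) e unfolding PP_def by (meson half_gt_zero)
  show "\<exists>L0. \<forall>L\<ge>L0. \<exists>\<delta>>0. \<exists>s>0. \<forall>h::'a\<Rightarrow>real. Hyp c h L \<delta> s \<longrightarrow>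
      \<bar>(\<integral>x. h x * g x \<partial>lebesgue) - (\<integral>x. c * g x \<partial>lebesgue)\<bar> \<le> \<epsilon>"
  proof (rule exI[of _ L0], intro allI impI)
    fix L assume "L0 \<le> L"
    then obtain \<delta> s where ds: "\<delta> > 0" "s > 0" "\<forall>h::'a\<Rightarrow>real. Hyp c h L \<delta> s \<longrightarrow>
      \<bar>(\<integral>x. h x * g' x \<partial>lebesgue) - (\<integral>x. c * g' x \<partial>lebesgue)\<bar> \<le> \<epsilon>/2"
      using L0 by blast
    show "\<exists>\<delta>>0. \<exists>s>0. \<forall>h::'a\<Rightarrow>real. Hyp c h L \<delta> s \<longrightarrow>
      \<bar>(\<integral>x. h x * g x \<partial>lebesgue) - (\<integral>x. c * g x \<partial>lebesgue)\<bar> \<le> \<epsilon>"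
    proof (rule exI[of _ \<delta>], intro conjI ds(1), rule exI[of _ s], intro conjI ds(2) allI impI)
      fix h :: "'a \<Rightarrow> real" assume H: "Hyp c h L \<delta> s"
      then have u: "unitf h" unfolding Hyp_def by auto
      have 1: "\<bar>(\<integral>x. h x * g' x \<partial>lebesgue) - (\<integral>x. c * g' x \<partial>lebesgue)\<bar> \<le> \<epsilon>/2"
        using ds(3) H by blast
      have 2: "\<bar>((\<integral>x. h x * g x \<partial>lebesgue) - (\<integral>x. c * g x \<partial>lebesgue))
         - ((\<integral>x. h x * g' x \<partial>lebesgue) - (\<integral>x. c * g' x \<partial>lebesgue))\<bar>
         \<le> (\<integral>x. \<bar>g x - g' x\<bar> \<partial>lebesgue)"
        by (rule diff_bound[OF u c g g'(1)])
      show "\<bar>(\<integral>x. h x * g x \<partial>lebesgue) - (\<integral>x. c * g x \<partial>lebesgue)\<bar> \<le> \<epsilon>"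
        using 1 2 g'(3) by linarith
    qed
  qed
qed

lemma PP_add:
  fixes f g :: "'a::euclidean_space \<Rightarrow> real"
  assumes c: "0 \<le> c" "c \<le> 1" and f: "integrable lebesgue f" "PP c f" and g: "integrable lebesgue g" "PP c g"
  shows "PP c (\<lambda>x. f x + g x)"
  unfolding PP_def
proof (intro allI impI)
  fix \<epsilon> :: real assume e: "\<epsilon> > 0"
  obtain L1 where L1: "\<forall>L\<ge>L1. \<exists>\<delta>>0. \<exists>s>0. \<forall>h::'a\<Rightarrow>real. Hyp c h L \<delta> s \<longrightarrow>
      \<bar>(\<integral>x. h x * f x \<partial>lebesgue) - (\<integral>x. c * f x \<partial>lebesgue)\<bar> \<le> \<epsilon>/2"
    using f(2) e unfolding PP_def by (meson half_gt_zero)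
  obtain L2 where L2: "\<forall>L\<ge>L2. \<exists>\<delta>>0. \<exists>s>0. \<forall>h::'a\<Rightarrow>real. Hyp c h L \<delta> s \<longrightarrow>
      \<bar>(\<integral>x. h x * g x \<partial>lebesgue) - (\<integral>x. c * g x \<partial>lebesgue)\<bar> \<le> \<epsilon>/2"
    using g(2) e unfolding PP_def by (meson half_gt_zero)
  show "\<exists>L0. \<forall>L\<ge>L0. \<exists>\<delta>>0. \<exists>s>0. \<forall>h::'a\<Rightarrow>real. Hyp c h L \<delta> s \<longrightarrow>
      \<bar>(\<integral>x. h x * (f x + g x) \<partial>lebesgue) - (\<integral>x. c * (f x + g x) \<partial>lebesgue)\<bar> \<le> \<epsilon>"
  proof (rule exI[of _ "max L1 L2"], intro allI impI)
    fix L assume L: "max L1 L2 \<le> L"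
    obtain \<delta>1 s1 where ds1: "\<delta>1 > 0" "s1 > 0" "\<forall>h::'a\<Rightarrow>real. Hyp c h L \<delta>1 s1 \<longrightarrow>
      \<bar>(\<integral>x. h x * f x \<partial>lebesgue) - (\<integral>x. c * f x \<partial>lebesgue)\<bar> \<le> \<epsilon>/2"
      using L1 L by auto
    obtain \<delta>2 s2 where ds2: "\<delta>2 > 0" "s2 > 0" "\<forall>h::'a\<Rightarrow>real. Hyp c h L \<delta>2 s2 \<longrightarrow>
      \<bar>(\<integral>x. h x * g x \<partial>lebesgue) - (\<integral>x. c * g x \<partial>lebesgue)\<bar> \<le> \<epsilon>/2"
      using L2 L by auto
    show "\<exists>\<delta>>0. \<exists>s>0. \<forall>h::'a\<Rightarrow>real. Hyp c h L \<delta> s \<longrightarrow>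
      \<bar>(\<integral>x. h x * (f x + g x) \<partial>lebesgue) - (\<integral>x. c * (f x + g x) \<partial>lebesgue)\<bar> \<le> \<epsilon>"
    proof (rule exI[of _ "min \<delta>1 \<delta>2"], intro conjI, simp add: ds1 ds2,
        rule exI[of _ "min s1 s2"], intro conjI, simp add: ds1 ds2, intro allI impI)
      fix h :: "'a \<Rightarrow> real" assume H: "Hyp c h L (min \<delta>1 \<delta>2) (min s1 s2)"
      then have u: "unitf h" unfolding Hyp_def by auto
      have H1: "Hyp c h L \<delta>1 s1" by (rule Hyp_mono[OF H]) (use ds1 ds2 in auto)
      have H2: "Hyp c h L \<delta>2 s2" by (rule Hyp_mono[OF H]) (use ds1 ds2 in auto)
      have 1: "\<bar>(\<integral>x. h x * f x \<partial>lebesgue) - (\<integral>x. c * f x \<partial>lebesgue)\<bar> \<le> \<epsilon>/2"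
        using ds1(3) H1 by blast
      have 2: "\<bar>(\<integral>x. h x * g x \<partial>lebesgue) - (\<integral>x. c * g x \<partial>lebesgue)\<bar> \<le> \<epsilon>/2"
        using ds2(3) H2 by blast
      have e1: "(\<integral>x. h x * (f x + g x) \<partial>lebesgue) = (\<integral>x. h x * f x \<partial>lebesgue) + (\<integral>x. h x * g x \<partial>lebesgue)"
        using int_hg[OF u f(1)] int_hg[OF u g(1)] by (simp add: distrib_left)
      have e2: "(\<integral>x. c * (f x + g x) \<partial>lebesgue) = (\<integral>x. c * f x \<partial>lebesgue) + (\<integral>x. c * g x \<partial>lebesgue)"
        using f(1) g(1) by (simp add: distrib_left)
      show "\<bar>(\<integral>x. h x * (f x + g x) \<partial>lebesgue) - (\<integral>x. c * (f x + g x) \<partial>lebesgue)\<bar> \<le> \<epsilon>"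
        unfolding e1 e2 using 1 2 by linarith
    qed
  qed
qed



lemma PP_ind_bounded:
  fixes A :: "'a::euclidean_space set"
  assumes c: "0 \<le> c" "c \<le> 1" and A: "A \<in> sets lebesgue" and AL: "A \<subseteq> cube 0 L0" and L00: "L0 \<ge> 0"
  shows "PP c (\<lambda>x. indicator A x *\<^sub>R a)"
  unfolding PP_def
proof (intro allI impI)
  fix \<epsilon> :: real assume e: "\<epsilon> > 0"
  define \<eta> where "\<eta> = min 1 (\<epsilon> / (5 * (\<bar>a\<bar> + 1)))"
  have \<eta>0: "\<eta> > 0" unfolding \<eta>_def using e by (simp add: add_pos_nonneg)
  have \<eta>1: "\<eta> \<le> 1" unfolding \<eta>_def by simp
  have \<eta>e: "\<bar>a\<bar> * (5 * \<eta>) \<le> \<epsilon>"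
  proof -
    have pos: "5 * (\<bar>a\<bar> + 1) > 0" by (simp add: add_pos_nonneg)
    have "\<eta> \<le> \<epsilon> / (5 * (\<bar>a\<bar> + 1))" unfolding \<eta>_def by simp
    then have "\<eta> * (5 * (\<bar>a\<bar> + 1)) \<le> \<epsilon>" using pos by (simp add: pos_le_divide_eq)
    moreover have "\<bar>a\<bar> * (5 * \<eta>) \<le> \<eta> * (5 * (\<bar>a\<bar> + 1))" using \<eta>0 by (simp add: algebra_simps)
    ultimately show ?thesis by linarith
  qed
  obtain L1 where L1: "\<forall>L\<ge>L1. \<exists>\<delta>>0. \<exists>s>0. \<forall>h::'a\<Rightarrow>real. unitf h \<and> (\<forall>y. (LINT x:cube y s|lebesgue. h x) \<le> (c+\<delta>) * s ^ DIM('a))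
     \<and> (c-\<delta>) * L ^ DIM('a) \<le> (LINT x:cube 0 L|lebesgue. h x) \<longrightarrow>
     \<bar>(LINT x:A|lebesgue. h x) - c * measure lebesgue A\<bar> \<le> 5*\<eta>"
    using base_bounded[OF c A AL L00 \<eta>0 \<eta>1] by blast
  show "\<exists>L0. \<forall>L\<ge>L0. \<exists>\<delta>>0. \<exists>s>0. \<forall>h::'a\<Rightarrow>real. Hyp c h L \<delta> s \<longrightarrow>
      \<bar>(\<integral>x. h x * (indicator A x *\<^sub>R a) \<partial>lebesgue) - (\<integral>x. c * (indicator A x *\<^sub>R a) \<partial>lebesgue)\<bar> \<le> \<epsilon>"
  proof (rule exI[of _ L1], intro allI impI)
    fix L assume "L1 \<le> L"
    then obtain \<delta> s where ds: "\<delta> > 0" "s > 0" "\<forall>h::'a\<Rightarrow>real. unitf h \<and> (\<forall>y. (LINT x:cube y s|lebesgue. h x) \<le> (c+\<delta>) * s ^ DIM('a))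
     \<and> (c-\<delta>) * L ^ DIM('a) \<le> (LINT x:cube 0 L|lebesgue. h x) \<longrightarrow>
     \<bar>(LINT x:A|lebesgue. h x) - c * measure lebesgue A\<bar> \<le> 5*\<eta>"
      using L1 by blast
    show "\<exists>\<delta>>0. \<exists>s>0. \<forall>h::'a\<Rightarrow>real. Hyp c h L \<delta> s \<longrightarrow>
      \<bar>(\<integral>x. h x * (indicator A x *\<^sub>R a) \<partial>lebesgue) - (\<integral>x. c * (indicator A x *\<^sub>R a) \<partial>lebesgue)\<bar> \<le> \<epsilon>"
    proof (rule exI[of _ \<delta>], intro conjI ds(1), rule exI[of _ s], intro conjI ds(2) allI impI)
      fix h :: "'a \<Rightarrow> real" assume H: "Hyp c h L \<delta> s"
      then have "unitf h \<and> (\<forall>y. (LINT x:cube y s|lebesgue. h x) \<le> (c+\<delta>) * s ^ DIM('a))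
         \<and> (c-\<delta>) * L ^ DIM('a) \<le> (LINT x:cube 0 L|lebesgue. h x)"
        unfolding Hyp_def by auto
      then have b: "\<bar>(LINT x:A|lebesgue. h x) - c * measure lebesgue A\<bar> \<le> 5*\<eta>"
        using ds(3) by blast
      have e1: "(\<integral>x. h x * (indicator A x *\<^sub>R a) \<partial>lebesgue) = a * (LINT x:A|lebesgue. h x)"
        unfolding set_lebesgue_integral_def integral_mult_right_zero[symmetric]
        by (rule Bochner_Integration.integral_cong) (auto simp: indicator_def)
      have e2: "(\<integral>x. c * (indicator A x *\<^sub>R a) \<partial>lebesgue) = a * (c * measure lebesgue A)"
      proof -
        have "(\<integral>x. c * (indicator A x *\<^sub>R a) \<partial>lebesgue) = (\<integral>x. (c * a) * indicator A x \<partial>lebesgue)"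
          by (rule Bochner_Integration.integral_cong) (auto simp: indicator_def)
        also have "\<dots> = (c * a) * measure lebesgue A" by simp
        finally show ?thesis by simp
      qed
      have "\<bar>a * (LINT x:A|lebesgue. h x) - a * (c * measure lebesgue A)\<bar>
          = \<bar>a\<bar> * \<bar>(LINT x:A|lebesgue. h x) - c * measure lebesgue A\<bar>"
        by (simp add: abs_mult[symmetric] right_diff_distrib)
      also have "\<dots> \<le> \<bar>a\<bar> * (5 * \<eta>)" using b by (intro mult_left_mono) auto
      finally show "\<bar>(\<integral>x. h x * (indicator A x *\<^sub>R a) \<partial>lebesgue) - (\<integral>x. c * (indicator A x *\<^sub>R a) \<partial>lebesgue)\<bar> \<le> \<epsilon>"
        unfolding e1 e2 using \<eta>e by linarith
    qed
  qed
qed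

lemma in_cube_big: "\<exists>k::nat. x \<in> cube (0::'a::euclidean_space) (real k)"
proof -
  obtain k :: nat where k: "2 * norm x \<le> real k" using real_arch_simple by blast
  have "x \<in> cube 0 (real k)"
    unfolding cube_mem
  proof
    fix b :: 'a assume "b \<in> Basis"
    then have "\<bar>x \<bullet> b\<bar> \<le> norm x" by (rule Basis_le_norm)
    then show "0 \<bullet> b - real k / 2 \<le> x \<bullet> b \<and> x \<bullet> b \<le> 0 \<bullet> b + real k / 2" using k by auto
  qed
  then show ?thesis by blast
qed

lemma cube_mono_nat: "decseq (\<lambda>k::nat. A - cube (0::'a::euclidean_space) (real k))"
  unfolding decseq_def using cube_mono by (metis Diff_mono of_nat_mono order_refl)

lemma int_ind: "A \<in> sets lebesgue \<Longrightarrow> emeasure lebesgue A < \<infinity> \<Longrightarrow> integrable lebesgue (\<lambda>x. indicator A x *\<^sub>R (a::real))"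
  by (intro integrable_scaleR_left) (simp add: integrable_indicator_iff)

lemma PP_indicator:
  fixes A :: "'a::euclidean_space set"
  assumes c: "0 \<le> c" "c \<le> 1" and A: "A \<in> sets lebesgue" and fin: "emeasure lebesgue A < \<infinity>"
  shows "PP c (\<lambda>x. indicator A x *\<^sub>R a)"
proof (rule PP_approx[OF c int_ind[OF A fin]])
  fix e :: real assume e: "e > 0"
  define D where "D k = A - cube 0 (real k)" for k :: nat
  have Dsets: "range D \<subseteq> sets lebesgue" unfolding D_def using A by auto
  have Dfin: "emeasure lebesgue (D k) \<noteq> \<infinity>" for k
    using fin emeasure_mono[of "D k" A lebesgue] A unfolding D_def by (auto simp: top_unique)
  have Dint: "(\<Inter>k. D k) = {}" unfolding D_def using in_cube_big by blast
  have "(\<lambda>k. measure lebesgue (D k)) \<longlonglongrightarrow> measure lebesgue (\<Inter>k. D k)"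
    by (rule Lim_measure_decseq[OF Dsets _ Dfin]) (unfold D_def, rule cube_mono_nat)
  then have "(\<lambda>k. measure lebesgue (D k)) \<longlonglongrightarrow> 0" by (simp add: Dint)
  then have "eventually (\<lambda>k. measure lebesgue (D k) < e / (\<bar>a\<bar> + 1)) sequentially"
    using e by (intro order_tendstoD) (auto simp: add_pos_nonneg)
  then obtain k where k: "measure lebesgue (D k) < e / (\<bar>a\<bar> + 1)"
    by (auto dest: eventually_happens)
  define A' where "A' = A \<inter> cube 0 (real k)"
  have A'sets: "A' \<in> sets lebesgue" unfolding A'_def using A by auto
  have A'fin: "emeasure lebesgue A' < \<infinity>"
    using fin emeasure_mono[of A' A lebesgue] A unfolding A'_def by (auto intro: le_less_trans)
  show "\<exists>g'. integrable lebesgue g' \<and> PP c g' \<and> (\<integral>x. \<bar>indicator A x *\<^sub>R a - g' x\<bar> \<partial>lebesgue) \<le> e"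
  proof (intro exI conjI)
    show "integrable lebesgue (\<lambda>x. indicator A' x *\<^sub>R a)" by (rule int_ind[OF A'sets A'fin])
    show "PP c (\<lambda>x. indicator A' x *\<^sub>R a)"
      by (rule PP_ind_bounded[OF c A'sets, of "real k"]) (auto simp: A'_def)
    have "(\<integral>x. \<bar>indicator A x *\<^sub>R a - indicator A' x *\<^sub>R a\<bar> \<partial>lebesgue) = (\<integral>x. \<bar>a\<bar> * indicator (D k) x \<partial>lebesgue)"
      by (rule Bochner_Integration.integral_cong) (auto simp: indicator_def A'_def D_def)
    also have "\<dots> = \<bar>a\<bar> * measure lebesgue (D k)" by simp
    also have "\<dots> \<le> \<bar>a\<bar> * (e / (\<bar>a\<bar> + 1))" using k by (intro mult_left_mono) auto
    also have "\<dots> \<le> e" using e by (simp add: field_simps)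
    finally show "(\<integral>x. \<bar>indicator A x *\<^sub>R a - indicator A' x *\<^sub>R a\<bar> \<partial>lebesgue) \<le> e" .
  qed
qed

lemma PP_all:
  fixes g :: "'a::euclidean_space \<Rightarrow> real"
  assumes c: "0 \<le> c" "c \<le> 1" and g: "integrable lebesgue g"
  shows "PP c g"
  using g
proof (induct rule: integrable_induct)
  case (base A a)
  then show ?case using PP_indicator[OF c] by blast
next
  case (add f g)
  then show ?case using PP_add[OF c] by blast
next
  case (lim f s)
  show ?case
  proof (rule PP_approx[OF c lim(5)])
    fix e :: real assume e: "e > 0"
    define S where "S i x = \<bar>f x - s i x\<bar>" for i x
    define W where "W x = 3 * \<bar>f x\<bar>" for x
    have m1: "(\<lambda>x::'a. 0::real) \<in> borel_measurable lebesgue" by simp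
    have m2: "\<And>i. S i \<in> borel_measurable lebesgue"
      unfolding S_def using borel_measurable_integrable[OF lim(5)] borel_measurable_integrable[OF lim(1)] by measurable
    have i3: "integrable lebesgue W" unfolding W_def using lim(5) by auto
    have a4: "AE x in lebesgue. (\<lambda>i. S i x) \<longlonglongrightarrow> 0"
    proof (rule AE_I2)
      fix x :: 'a assume "x \<in> space lebesgue"
      then have "(\<lambda>i. s i x) \<longlonglongrightarrow> f x" using lim(3) by blast
      then have "(\<lambda>i. f x - s i x) \<longlonglongrightarrow> 0" using tendsto_diff[OF tendsto_const, of "\<lambda>i. s i x" "f x" sequentially "f x"] by simp
      then show "(\<lambda>i. S i x) \<longlonglongrightarrow> 0" unfolding S_def using tendsto_rabs_zero by blast
    qed
    have b5: "\<And>i. AE x in lebesgue. norm (S i x) \<le> W x"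
    proof (rule AE_I2)
      fix i x assume "x \<in> space (lebesgue :: 'a measure)"
      then have "\<bar>s i x\<bar> \<le> 2 * \<bar>f x\<bar>" using lim(4) by fastforce
      then show "norm (S i x) \<le> W x" unfolding S_def W_def by simp
    qed
    have "(\<lambda>i. integral\<^sup>L lebesgue (S i)) \<longlonglongrightarrow> integral\<^sup>L lebesgue (\<lambda>x::'a. 0::real)"
      by (rule integral_dominated_convergence[OF m1 m2 i3 a4 b5])
    then have "(\<lambda>i. \<integral>x. \<bar>f x - s i x\<bar> \<partial>lebesgue) \<longlonglongrightarrow> 0" by (simp add: S_def[abs_def])
    then have "eventually (\<lambda>i. (\<integral>x. \<bar>f x - s i x\<bar> \<partial>lebesgue) < e) sequentially"
      using e by (intro order_tendstoD) auto
    then obtain i where "(\<integral>x. \<bar>f x - s i x\<bar> \<partial>lebesgue) < e" by (auto dest: eventually_happens)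
    then show "\<exists>g'. integrable lebesgue g' \<and> PP c g' \<and> (\<integral>x. \<bar>f x - g' x\<bar> \<partial>lebesgue) \<le> e"
      using lim(1,2) by (intro exI[of _ "s i"]) auto
  qed
qed



lemma nbhd:
  fixes V :: "('a::euclidean_space \<Rightarrow> real) set"
  assumes V: "openin weakstar V" and k: "k \<in> V"
  shows "\<exists>G e. finite G \<and> (\<forall>g\<in>G. integrable lebesgue g) \<and> e > 0 \<and>
    (\<forall>h\<in>Sd. (\<forall>g\<in>G. \<bar>(LINT x|lebesgue. h x * g x) - (LINT x|lebesgue. k x * g x)\<bar> < e) \<longrightarrow> h \<in> V)"
proof -
  define I where "I = {g::'a \<Rightarrow> real. integrable lebesgue g}"
  define \<pi> where "\<pi> h = restrict (\<lambda>g. LINT x|lebesgue. h x * g x) I" for h :: "'a \<Rightarrow> real"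
  obtain U where U: "openin (product_topology (\<lambda>_. euclideanreal) I) U" and VU: "V = \<pi> -` U \<inter> Sd"
    using V unfolding weakstar_def openin_pullback_topology \<pi>_def I_def by blast
  have kU: "\<pi> k \<in> U" and kS: "k \<in> Sd" using k VU by auto
  obtain X where X: "\<pi> k \<in> (\<Pi>\<^sub>E i\<in>I. X i)" "\<And>i. openin euclideanreal (X i)"
    "finite {i. X i \<noteq> topspace euclideanreal}" "(\<Pi>\<^sub>E i\<in>I. X i) \<subseteq> U"
    using product_topology_open_contains_basis[OF U kU] by blast
  define G where "G = {i. X i \<noteq> UNIV} \<inter> I"
  have Gfin: "finite G" using X(3) unfolding G_def by auto
  have "\<forall>g\<in>G. \<exists>r>0. ball (LINT x|lebesgue. k x * g x) r \<subseteq> X g"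
  proof
    fix g assume g: "g \<in> G"
    then have "\<pi> k g \<in> X g" using X(1) unfolding G_def by (auto simp: PiE_iff)
    then have "(LINT x|lebesgue. k x * g x) \<in> X g" using g unfolding \<pi>_def G_def by auto
    moreover have "open (X g)" using X(2)[of g] by simp
    ultimately show "\<exists>r>0. ball (LINT x|lebesgue. k x * g x) r \<subseteq> X g"
      using open_contains_ball by blast
  qed
  then obtain R where R: "\<And>g. g \<in> G \<Longrightarrow> R g > 0 \<and> ball (LINT x|lebesgue. k x * g x) (R g) \<subseteq> X g"
    by metis
  define e where "e = Min (insert 1 (R ` G))"
  have e0: "e > 0" unfolding e_def using Gfin R by (subst Min_gr_iff) auto
  have eR: "\<And>g. g \<in> G \<Longrightarrow> e \<le> R g" unfolding e_def using Gfin by (intro Min_le) auto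
  show ?thesis
  proof (intro exI[of _ G] exI[of _ e] conjI ballI impI Gfin e0)
    show "\<And>g. g \<in> G \<Longrightarrow> integrable lebesgue g" unfolding G_def I_def by auto
    fix h assume hS: "h \<in> Sd" and hb: "\<forall>g\<in>G. \<bar>(LINT x|lebesgue. h x * g x) - (LINT x|lebesgue. k x * g x)\<bar> < e"
    have "\<pi> h \<in> (\<Pi>\<^sub>E i\<in>I. X i)"
    proof (unfold PiE_iff, intro conjI ballI)
      show "\<pi> h \<in> extensional I" unfolding \<pi>_def by simp
      fix i assume i: "i \<in> I"
      show "\<pi> h i \<in> X i"
      proof (cases "i \<in> G")
        case True
        then have "(LINT x|lebesgue. h x * i x) \<in> ball (LINT x|lebesgue. k x * i x) (R i)"
          using hb eR[OF True] by (auto simp: dist_real_def abs_minus_commute)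
        then show ?thesis using R[OF True] i unfolding \<pi>_def by auto
      next
        case False
        then show ?thesis using i unfolding G_def by auto
      qed
    qed
    then show "h \<in> V" using X(4) hS VU by auto
  qed
qed

lemma T_inv_back:
  assumes "T_invariant V" "transl v h \<in> V"
  shows "h \<in> V"
proof -
  have "transl (-v) ` V = V" using assms(1) unfolding T_invariant_def by blast
  moreover have "transl (-v) (transl v h) = h" unfolding transl_def by simp
  ultimately show ?thesis using assms(2) by (metis image_eqI)
qed

lemma affine_meas: "(\<lambda>x::'a::euclidean_space. w + t *\<^sub>R x) \<in> lebesgue \<rightarrow>\<^sub>M lebesgue"
proof -
  have "(\<lambda>x::'a. w + (\<Sum>j\<in>Basis. (t * (x \<bullet> j)) *\<^sub>R j)) = (\<lambda>x. w + t *\<^sub>R x)"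
    unfolding scaleR_scaleR[symmetric] scaleR_sum_right[symmetric] euclidean_representation by simp
  moreover have "(\<lambda>x::'a. w + (\<Sum>j\<in>Basis. (t * (x \<bullet> j)) *\<^sub>R j)) \<in> lebesgue \<rightarrow>\<^sub>M lebesgue" if "t \<noteq> 0"
    using lebesgue_affine_measurable[of "\<lambda>_. t" w] that by simp
  ultimately show ?thesis
    by (cases "t = 0") (auto)
qed

lemma AE_affine:
  fixes P :: "'a::euclidean_space \<Rightarrow> bool"
  assumes t: "t \<noteq> 0" and ae: "AE x in lebesgue. P x"
  shows "AE x in lebesgue. P (w + t *\<^sub>R x)"
proof -
  obtain N where N: "{x \<in> space lebesgue. \<not> P x} \<subseteq> N" "N \<in> null_sets lebesgue"
    by (rule AE_E[OF ae]) blast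
  define T where "T x = w + t *\<^sub>R x" for x :: 'a
  have Tm: "T \<in> lebesgue \<rightarrow>\<^sub>M lebesgue" unfolding T_def by (rule affine_meas)
  have vs: "T -` N \<in> sets lebesgue"
    using measurable_sets[OF Tm, of N] N(2) by auto
  have img: "T -` N = (\<lambda>y. (1/t) *\<^sub>R y + (- (1/t) *\<^sub>R w)) ` N"
  proof
    show "T -` N \<subseteq> (\<lambda>y. (1/t) *\<^sub>R y + (- (1/t) *\<^sub>R w)) ` N"
    proof
      fix x assume "x \<in> T -` N"
      then have "T x \<in> N" by simp
      moreover have "x = (1/t) *\<^sub>R T x + (- (1/t) *\<^sub>R w)"
        using t unfolding T_def by (simp add: scaleR_add_right)
      ultimately show "x \<in> (\<lambda>y. (1/t) *\<^sub>R y + (- (1/t) *\<^sub>R w)) ` N" by blast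
    qed
    show "(\<lambda>y. (1/t) *\<^sub>R y + (- (1/t) *\<^sub>R w)) ` N \<subseteq> T -` N"
    proof
      fix x assume "x \<in> (\<lambda>y. (1/t) *\<^sub>R y + (- (1/t) *\<^sub>R w)) ` N"
      then obtain y where y: "y \<in> N" "x = (1/t) *\<^sub>R y + (- (1/t) *\<^sub>R w)" by blast
      then have "T x = y" using t unfolding T_def by (simp add: scaleR_add_right scaleR_diff_right)
      then show "x \<in> T -` N" using y by simp
    qed
  qed
  have "emeasure lebesgue (T -` N) = \<bar>1/t\<bar> ^ DIM('a) * emeasure lebesgue N"
    unfolding img by (rule emeasure_lebesgue_affine)
  also have "\<dots> = 0" using N(2) by auto
  finally have "T -` N \<in> null_sets lebesgue" using vs by auto
  moreover have "{x \<in> space lebesgue. \<not> P (w + t *\<^sub>R x)} \<subseteq> T -` N"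
    using N(1) unfolding T_def by auto
  ultimately show ?thesis by (rule AE_I')
qed



lemma affine_in_cube:
  assumes t: "t > 0"
  shows "w + t *\<^sub>R x \<in> cube (w + t *\<^sub>R y) (t * \<sigma>) \<longleftrightarrow> x \<in> cube y \<sigma>"
proof -
  have "(w + t *\<^sub>R y) \<bullet> b - t * \<sigma> / 2 \<le> (w + t *\<^sub>R x) \<bullet> b \<and> (w + t *\<^sub>R x) \<bullet> b \<le> (w + t *\<^sub>R y) \<bullet> b + t * \<sigma> / 2
      \<longleftrightarrow> y \<bullet> b - \<sigma> / 2 \<le> x \<bullet> b \<and> x \<bullet> b \<le> y \<bullet> b + \<sigma> / 2" for b
  proof -
    have "(w + t *\<^sub>R y) \<bullet> b - t * \<sigma> / 2 \<le> (w + t *\<^sub>R x) \<bullet> b \<longleftrightarrow> t * (y \<bullet> b - \<sigma> / 2) \<le> t * (x \<bullet> b)"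
      by (simp add: inner_simps algebra_simps)
    also have "\<dots> \<longleftrightarrow> y \<bullet> b - \<sigma> / 2 \<le> x \<bullet> b" using t by simp
    finally have 1: "(w + t *\<^sub>R y) \<bullet> b - t * \<sigma> / 2 \<le> (w + t *\<^sub>R x) \<bullet> b \<longleftrightarrow> y \<bullet> b - \<sigma> / 2 \<le> x \<bullet> b" .
    have "(w + t *\<^sub>R x) \<bullet> b \<le> (w + t *\<^sub>R y) \<bullet> b + t * \<sigma> / 2 \<longleftrightarrow> t * (x \<bullet> b) \<le> t * (y \<bullet> b + \<sigma> / 2)"
      by (simp add: inner_simps algebra_simps)
    also have "\<dots> \<longleftrightarrow> x \<bullet> b \<le> y \<bullet> b + \<sigma> / 2" using t by simp
    finally have 2: "(w + t *\<^sub>R x) \<bullet> b \<le> (w + t *\<^sub>R y) \<bullet> b + t * \<sigma> / 2 \<longleftrightarrow> x \<bullet> b \<le> y \<bullet> b + \<sigma> / 2" .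
    show ?thesis using 1 2 by blast
  qed
  then show ?thesis unfolding cube_mem by blast
qed

lemma cv_cube:
  fixes F :: "'a::euclidean_space \<Rightarrow> real"
  assumes F[measurable]: "F \<in> borel_measurable borel" and t: "t > 0"
  shows "(LINT x:cube (w + t *\<^sub>R y) (t*\<sigma>)|lebesgue. F x) = t ^ DIM('a) * (LINT x:cube y \<sigma>|lebesgue. F (w + t *\<^sub>R x))"
proof -
  let ?C = "cube (w + t *\<^sub>R y) (t*\<sigma>)"
  define G where "G x = indicator ?C x *\<^sub>R F x" for x
  have Gm[measurable]: "G \<in> borel_measurable borel" unfolding G_def by measurable
  have Tm[measurable]: "(\<lambda>x::'a. w + t *\<^sub>R x) \<in> borel \<rightarrow>\<^sub>M borel" by measurable
  have "(LINT x:?C|lebesgue. F x) = integral\<^sup>L lborel G"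
    unfolding set_lebesgue_integral_def G_def by (rule integral_completion) measurable
  also have "\<dots> = integral\<^sup>L (density (distr lborel borel (\<lambda>x. w + t *\<^sub>R x)) (\<lambda>_. ennreal (\<bar>t\<bar> ^ DIM('a)))) G"
    using lborel_affine[of t w] t by simp
  also have "\<dots> = integral\<^sup>L (distr lborel borel (\<lambda>x. w + t *\<^sub>R x)) (\<lambda>x. (\<bar>t\<bar> ^ DIM('a)) *\<^sub>R G x)"
    by (rule integral_density) auto
  also have "\<dots> = integral\<^sup>L lborel (\<lambda>x. (\<bar>t\<bar> ^ DIM('a)) *\<^sub>R G (w + t *\<^sub>R x))"
    by (rule integral_distr) auto
  also have "\<dots> = t ^ DIM('a) * integral\<^sup>L lborel (\<lambda>x. indicator (cube y \<sigma>) x *\<^sub>R F (w + t *\<^sub>R x))"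
    using t affine_in_cube[OF t, of w _ y \<sigma>] by (simp add: G_def indicator_def)
  also have "integral\<^sup>L lborel (\<lambda>x. indicator (cube y \<sigma>) x *\<^sub>R F (w + t *\<^sub>R x)) = (LINT x:cube y \<sigma>|lebesgue. F (w + t *\<^sub>R x))"
    unfolding set_lebesgue_integral_def by (rule integral_completion[symmetric]) measurable
  finally show ?thesis .
qed

lemma less_Limsup_freq:
  fixes f :: "_ \<Rightarrow> 'a::complete_linorder"
  assumes "a < Limsup F f"
  shows "\<exists>\<^sub>F x in F. a < f x"
proof (rule ccontr)
  assume "\<not> (\<exists>\<^sub>F x in F. a < f x)"
  then have "eventually (\<lambda>x. f x \<le> a) F" by (simp add: not_frequently not_less)
  then have "Limsup F f \<le> a" by (rule Limsup_bounded)
  with assms show False by simp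
qed

context unitf
begin

lemma mcube: "s \<ge> 0 \<Longrightarrow> measure lebesgue (cube (y::'a) s) = s ^ DIM('a)"
  using measure_cube[of s y] by simp

lemma ecube: "emeasure lebesgue (cube (y::'a) s) < \<infinity>"
proof -
  have "emeasure lebesgue (cube y s) = emeasure lborel (cube y s)" by simp
  also have "\<dots> < \<infinity>" using emeasure_compact_finite[OF compact_cube] by simp
  finally show ?thesis .
qed

lemma avg_le1: "T > 0 \<Longrightarrow> (LINT x:cube v T|lebesgue. h x) / measure lebesgue (cube v T) \<le> 1"
  using si_le[of "cube v T"] ecube mcube[of T v] by simp

lemma avg_ge0: "0 \<le> (LINT x:cube v T|lebesgue. h x) / measure lebesgue (cube v T)"
  using si_nonneg by simp

lemma avg_bdd: "T > 0 \<Longrightarrow> bdd_above (range (\<lambda>v. (LINT x:cube v T|lebesgue. h x) / measure lebesgue (cube v T)))"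
  using avg_le1 by (intro bdd_aboveI[of _ 1]) auto

definition DD :: "real \<Rightarrow> real" where
  "DD T = (SUP v. (LINT x:cube v T|lebesgue. h x) / measure lebesgue (cube v T))"

lemma DD_le1: "T > 0 \<Longrightarrow> DD T \<le> 1"
  unfolding DD_def using avg_le1 by (intro cSUP_least) auto

lemma DD_ge0: "T > 0 \<Longrightarrow> 0 \<le> DD T"
  unfolding DD_def using avg_ge0[of 0 T] cSUP_upper[OF _ avg_bdd, of 0 T] by fastforce

lemma ubd_eq: "upper_banach_density h = real_of_ereal (Limsup at_top (\<lambda>T. ereal (DD T)))"
  unfolding upper_banach_density_def DD_def ..

lemma Limsup_fin: "Limsup at_top (\<lambda>T. ereal (DD T)) = ereal (upper_banach_density h)"
  and ubd_bounds: "0 \<le> upper_banach_density h" "upper_banach_density h \<le> 1"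
proof -
  have ev: "eventually (\<lambda>T. (0::real) < T) at_top" by (rule eventually_gt_at_top)
  have "Limsup at_top (\<lambda>T. ereal (DD T)) \<le> 1"
    by (rule Limsup_bounded) (use ev in \<open>eventually_elim, simp add: DD_le1\<close>)
  moreover have ev0: "eventually (\<lambda>T. 0 \<le> ereal (DD T)) at_top"
    using ev by eventually_elim (simp add: DD_ge0)
  then have "0 \<le> Limsup at_top (\<lambda>T. ereal (DD T))"
    by (intro le_Limsup) simp_all
  ultimately have "Limsup at_top (\<lambda>T. ereal (DD T)) = ereal (real_of_ereal (Limsup at_top (\<lambda>T. ereal (DD T))))"
    "0 \<le> real_of_ereal (Limsup at_top (\<lambda>T. ereal (DD T)))" "real_of_ereal (Limsup at_top (\<lambda>T. ereal (DD T))) \<le> 1"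
    by (cases "Limsup at_top (\<lambda>T. ereal (DD T))"; auto)+
  then show "Limsup at_top (\<lambda>T. ereal (DD T)) = ereal (upper_banach_density h)"
    "0 \<le> upper_banach_density h" "upper_banach_density h \<le> 1"
    unfolding ubd_eq by auto
qed

lemma upper_ev:
  assumes d: "\<delta> > 0"
  shows "\<exists>T0>0. \<forall>T\<ge>T0. \<forall>v. (LINT x:cube v T|lebesgue. h x) \<le> (upper_banach_density h + \<delta>) * T ^ DIM('a)"
proof -
  let ?c = "upper_banach_density h"
  have "ereal (?c + \<delta>) > Limsup at_top (\<lambda>T. ereal (DD T))" using d by (simp add: Limsup_fin)
  then have "eventually (\<lambda>T. ereal (DD T) < ereal (?c + \<delta>)) at_top" by (rule Limsup_lessD)
  then obtain N where N: "\<And>T. T \<ge> N \<Longrightarrow> DD T < ?c + \<delta>"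
    unfolding eventually_at_top_linorder by auto
  show ?thesis
  proof (intro exI[of _ "max N 1"] conjI allI impI)
    show "max N 1 > 0" by simp
    fix T v assume T: "max N 1 \<le> T"
    then have T0: "T > 0" by simp
    have "(LINT x:cube v T|lebesgue. h x) / measure lebesgue (cube v T) \<le> DD T"
      unfolding DD_def by (rule cSUP_upper[OF _ avg_bdd[OF T0]]) simp
    also have "\<dots> \<le> ?c + \<delta>" using N[of T] T by simp
    finally have "(LINT x:cube v T|lebesgue. h x) / T ^ DIM('a) \<le> ?c + \<delta>" using mcube[of T v] T0 by simp
    then show "(LINT x:cube v T|lebesgue. h x) \<le> (?c + \<delta>) * T ^ DIM('a)"
      using T0 by (simp add: divide_le_eq)
  qed
qed

lemma lower_freq:
  assumes d: "\<delta> > 0"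
  shows "\<exists>T\<ge>T0. T > 0 \<and> (\<exists>z. (upper_banach_density h - \<delta>) * T ^ DIM('a) < (LINT x:cube z T|lebesgue. h x))"
proof -
  let ?c = "upper_banach_density h"
  have "ereal (?c - \<delta>) < Limsup at_top (\<lambda>T. ereal (DD T))" using d by (simp add: Limsup_fin)
  then have fr: "\<exists>\<^sub>F T in at_top. ereal (?c - \<delta>) < ereal (DD T)" by (rule less_Limsup_freq)
  have "\<exists>\<^sub>F T in at_top. T \<ge> max T0 1 \<and> ?c - \<delta> < DD T"
    using frequently_eventually_conj[OF fr eventually_ge_at_top[of "max T0 1"]] by (auto simp: conj_commute)
  then obtain T where T: "T \<ge> max T0 1" "?c - \<delta> < DD T" by (auto dest: frequently_ex)
  then have T0: "T > 0" by simp
  obtain z where z: "?c - \<delta> < (LINT x:cube z T|lebesgue. h x) / measure lebesgue (cube z T)"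
    using T(2) unfolding DD_def by (subst (asm) less_cSUP_iff[OF UNIV_not_empty avg_bdd[OF T0]]) blast
  then have "(?c - \<delta>) * T ^ DIM('a) < (LINT x:cube z T|lebesgue. h x)"
    using mcube[of T z] T0 by (simp add: less_divide_eq)
  then show ?thesis using T T0 by auto
qed

end



lemma lin1: "(a::real) - (T - 2*l)/2 \<le> x \<Longrightarrow> x - l/2 \<le> u \<Longrightarrow> 0 \<le> l \<Longrightarrow> a - T/2 \<le> u"
  by (simp add: field_simps)

lemma lin2: "(x::real) \<le> a + (T - 2*l)/2 \<Longrightarrow> u \<le> x + l/2 \<Longrightarrow> 0 \<le> l \<Longrightarrow> u \<le> a + T/2"
  by (simp add: field_simps)

lemma cube_inner:
  fixes x z :: "'a::euclidean_space" and T l :: real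
  assumes x: "x \<in> cube z (T - 2*l)" and l: "l \<ge> 0"
  shows "cube x l \<subseteq> cube z T"
proof
  fix u assume u: "u \<in> cube x l"
  show "u \<in> cube z T" unfolding cube_mem
  proof
    fix b :: 'a assume b: "b \<in> Basis"
    have 1: "z \<bullet> b - (T - 2*l)/2 \<le> x \<bullet> b" "x \<bullet> b \<le> z \<bullet> b + (T - 2*l)/2"
      using x b unfolding cube_mem by auto
    have 2: "x \<bullet> b - l/2 \<le> u \<bullet> b" "u \<bullet> b \<le> x \<bullet> b + l/2"
      using u b unfolding cube_mem by auto
    have 3: "z \<bullet> b - T / 2 \<le> u \<bullet> b" using lin1[OF 1(1) 2(1) l] .
    have 4: "u \<bullet> b \<le> z \<bullet> b + T / 2" using lin2[OF 1(2) 2(2) l] .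
    show "z \<bullet> b - T / 2 \<le> u \<bullet> b \<and> u \<bullet> b \<le> z \<bullet> b + T / 2"
      using 3 4 by blast
  qed
qed

lemma bernoulli_pow:
  fixes T l :: real
  assumes T: "T > 0" and l: "0 \<le> 2*l" "2*l \<le> T"
  shows "T ^ n - T ^ n * (real n * (2*l/T)) \<le> (T - 2*l) ^ n"
proof -
  have x: "-1 \<le> - (2*l/T)" using l T by (simp add: field_simps)
  have "1 + real n * (- (2*l/T)) \<le> (1 + (- (2*l/T))) ^ n"
    by (rule Bernoulli_inequality[OF x])
  then have "T ^ n * (1 - real n * (2*l/T)) \<le> T ^ n * (1 - 2*l/T) ^ n"
    using T by (intro mult_left_mono) auto
  also have "T ^ n * (1 - 2*l/T) ^ n = (T * (1 - 2*l/T)) ^ n" by (simp add: power_mult_distrib)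
  also have "T * (1 - 2*l/T) = T - 2*l" using T by (simp add: field_simps)
  finally show ?thesis by (simp add: algebra_simps)
qed

context unitf
begin

lemma subcube:
  assumes T: "T > 0" and l: "l > 0" "2*l \<le> T" and I: "\<alpha> * T ^ DIM('a) \<le> (LINT x:cube z T|lebesgue. h x)"
  shows "\<exists>y. (\<alpha> - 3 * real DIM('a) * l / T) * l ^ DIM('a) \<le> (LINT x:cube y l|lebesgue. h x)"
proof (rule ccontr)
  let ?n = "DIM('a)"
  define \<alpha>' where "\<alpha>' = \<alpha> - 3 * real ?n * l / T"
  assume "\<not> ?thesis"
  then have lt: "\<And>y. (LINT x:cube y l|lebesgue. h x) < \<alpha>' * l ^ ?n" unfolding \<alpha>'_def by (simp add: not_le)
  have lpos: "l ^ ?n > 0" using l by simp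
  have "0 < \<alpha>' * l ^ ?n" using lt[of z] si_nonneg[of "cube z l"] by linarith
  then have a0: "\<alpha>' \<ge> 0" using lpos l by (auto simp: zero_less_mult_iff)
  define A where "A = cube z (T - 2*l)"
  have IA: "(LINT x:A|lebesgue. h x) \<le> \<alpha>' * measure lborel (cube z T)"
  proof (rule transfer_real[OF l(1) a0])
    show "\<And>y. (LINT x:cube y l|lebesgue. h x) \<le> \<alpha>' * l ^ ?n" using lt less_imp_le by blast
    show "A \<in> sets borel" "cube z T \<in> sets borel" unfolding A_def by simp_all
    show "emeasure lborel (cube z T) < \<infinity>" using emeasure_compact_finite[OF compact_cube] by simp
    show "\<And>x. x \<in> A \<Longrightarrow> cube x l \<subseteq> cube z T" unfolding A_def by (rule cube_inner) (use l in auto)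
  qed
  have mT: "measure lborel (cube z T) = T ^ ?n" using measure_cube[of T z] T by simp
  have AT: "A \<subseteq> cube z T" unfolding A_def by (rule cube_mono) (use l in auto)
  have split: "(LINT x:cube z T|lebesgue. h x) = (LINT x:A|lebesgue. h x) + (LINT x:cube z T - A|lebesgue. h x)"
    by (rule si_diff) (use AT ecube[of z T] in \<open>auto simp: A_def\<close>)
  have mD: "measure lebesgue (cube z T - A) = T ^ ?n - (T - 2*l) ^ ?n"
  proof -
    have "measure lborel (cube z T - A) = measure lborel (cube z T) - measure lborel A"
      using AT emeasure_compact_finite[OF compact_cube, of z T] by (intro measure_Diff) (auto simp: A_def)
    moreover have "measure lborel A = (T - 2*l) ^ ?n" unfolding A_def using measure_cube[of "T - 2*l" z] l by simp
    ultimately show ?thesis using mT by (simp add: A_def)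
  qed
  have ID: "(LINT x:cube z T - A|lebesgue. h x) \<le> measure lebesgue (cube z T - A)"
  proof (rule si_le)
    show "cube z T - A \<in> sets lebesgue" unfolding A_def by simp
    have "emeasure lebesgue (cube z T - A) \<le> emeasure lebesgue (cube z T)"
      by (rule emeasure_mono) auto
    then show "emeasure lebesgue (cube z T - A) < \<infinity>" using ecube[of z T] by (meson le_less_trans)
  qed
  have B: "T ^ ?n - T ^ ?n * (real ?n * (2*l/T)) \<le> (T - 2*l) ^ ?n"
    by (rule bernoulli_pow) (use T l in auto)
  have IA': "(LINT x:A|lebesgue. h x) \<le> \<alpha>' * T ^ ?n" using IA mT by simp
  have key: "\<alpha> * T ^ ?n \<le> \<alpha>' * T ^ ?n + T ^ ?n * (real ?n * (2*l/T))"
    using I split IA' ID mD B by linarith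
  have e: "\<alpha>' * T ^ ?n + T ^ ?n * (real ?n * (2*l/T)) = \<alpha> * T ^ ?n - T ^ ?n * (real ?n * l / T)"
    unfolding \<alpha>'_def by (simp add: algebra_simps)
  have pos: "T ^ ?n * (real ?n * l / T) > 0" using T l by (simp add: DIM_positive)
  have "\<alpha> * T ^ ?n \<le> \<alpha> * T ^ ?n - T ^ ?n * (real ?n * l / T)" using key unfolding e .
  then show False using pos by linarith
qed

end

lemma PP_fin:
  fixes G :: "('a::euclidean_space \<Rightarrow> real) set"
  assumes "finite G" "\<forall>g\<in>G. PP c g" "\<epsilon> > 0"
  shows "\<exists>L0. \<forall>L\<ge>L0. \<exists>\<delta>>0. \<exists>s>0. \<forall>h::'a\<Rightarrow>real. Hyp c h L \<delta> s \<longrightarrow>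
     (\<forall>g\<in>G. \<bar>(\<integral>x. h x * g x \<partial>lebesgue) - (\<integral>x. c * g x \<partial>lebesgue)\<bar> \<le> \<epsilon>)"
  using assms
proof (induction G rule: finite_induct)
  case empty
  show ?case by (rule exI[of _ 0]) (auto intro!: exI[of _ 1])
next
  case (insert g G)
  obtain L1 where L1: "\<forall>L\<ge>L1. \<exists>\<delta>>0. \<exists>s>0. \<forall>h::'a\<Rightarrow>real. Hyp c h L \<delta> s \<longrightarrow>
     (\<forall>g\<in>G. \<bar>(\<integral>x. h x * g x \<partial>lebesgue) - (\<integral>x. c * g x \<partial>lebesgue)\<bar> \<le> \<epsilon>)"
    using insert by blast
  obtain L2 where L2: "\<forall>L\<ge>L2. \<exists>\<delta>>0. \<exists>s>0. \<forall>h::'a\<Rightarrow>real. Hyp c h L \<delta> s \<longrightarrow>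
      \<bar>(\<integral>x. h x * g x \<partial>lebesgue) - (\<integral>x. c * g x \<partial>lebesgue)\<bar> \<le> \<epsilon>"
    using insert(4) insert(5) unfolding PP_def by blast
  show ?case
  proof (rule exI[of _ "max L1 L2"], intro allI impI)
    fix L assume L: "max L1 L2 \<le> L"
    obtain \<delta>1 s1 where ds1: "\<delta>1 > 0" "s1 > 0" "\<forall>h::'a\<Rightarrow>real. Hyp c h L \<delta>1 s1 \<longrightarrow>
     (\<forall>g\<in>G. \<bar>(\<integral>x. h x * g x \<partial>lebesgue) - (\<integral>x. c * g x \<partial>lebesgue)\<bar> \<le> \<epsilon>)"
      using L1 L by auto
    obtain \<delta>2 s2 where ds2: "\<delta>2 > 0" "s2 > 0" "\<forall>h::'a\<Rightarrow>real. Hyp c h L \<delta>2 s2 \<longrightarrow>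
      \<bar>(\<integral>x. h x * g x \<partial>lebesgue) - (\<integral>x. c * g x \<partial>lebesgue)\<bar> \<le> \<epsilon>"
      using L2 L by auto
    show "\<exists>\<delta>>0. \<exists>s>0. \<forall>h::'a\<Rightarrow>real. Hyp c h L \<delta> s \<longrightarrow>
     (\<forall>g\<in>insert g G. \<bar>(\<integral>x. h x * g x \<partial>lebesgue) - (\<integral>x. c * g x \<partial>lebesgue)\<bar> \<le> \<epsilon>)"
    proof (rule exI[of _ "min \<delta>1 \<delta>2"], intro conjI, simp add: ds1 ds2,
        rule exI[of _ "min s1 s2"], intro conjI, simp add: ds1 ds2, intro allI impI)
      fix h :: "'a \<Rightarrow> real" assume H: "Hyp c h L (min \<delta>1 \<delta>2) (min s1 s2)"
      have H1: "Hyp c h L \<delta>1 s1" by (rule Hyp_mono[OF H]) (use ds1 ds2 in auto)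
      have H2: "Hyp c h L \<delta>2 s2" by (rule Hyp_mono[OF H]) (use ds1 ds2 in auto)
      show "\<forall>g\<in>insert g G. \<bar>(\<integral>x. h x * g x \<partial>lebesgue) - (\<integral>x. c * g x \<partial>lebesgue)\<bar> \<le> \<epsilon>"
        using ds1(3) H1 ds2(3) H2 by blast
    qed
  qed
qed



theorem theorem2p1:
  fixes f :: "'a::euclidean_space \<Rightarrow> real" and V :: "('a \<Rightarrow> real) set"
  assumes "f \<in> Sd"
    and "openin weakstar V"
    and "T_invariant V"
    and "(\<lambda>x. upper_banach_density f) \<in> V"
  shows "\<forall>\<^sub>F t in at_top. dilate t f \<in> V"
proof -
  let ?n = "DIM('a)"
  have fm[measurable]: "f \<in> borel_measurable lebesgue" and fae: "AE x in lebesgue. 0 \<le> f x \<and> f x \<le> 1"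
    using assms(1) unfolding Sd_def by auto
  obtain g' where g'm: "g' \<in> borel_measurable lborel" and g'ae: "AE x in lborel. f x = g' x"
    using completion_ex_borel_measurable_real[OF fm] by blast
  have g'b[measurable]: "g' \<in> borel_measurable borel" using g'm by simp
  define f2 where "f2 x = max 0 (min 1 (g' x))" for x
  have f2m[measurable]: "f2 \<in> borel_measurable borel" unfolding f2_def by measurable
  interpret U: unitf f2 by unfold_locales (auto simp: f2_def)
  have ae: "AE x in lebesgue. f x = f2 x"
    using AE_completion[OF g'ae] fae by eventually_elim (auto simp: f2_def)
  have seq: "(LINT x:E|lebesgue. f x) = (LINT x:E|lebesgue. f2 x)" if E: "E \<in> sets lebesgue" for E
    unfolding set_lebesgue_integral_def
    by (rule integral_cong_AE) (use E U.hleb ae in \<open>auto\<close>)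
  define c where "c = upper_banach_density f"
  have cf2: "c = upper_banach_density f2"
    unfolding c_def upper_banach_density_def using seq by simp
  have c0: "0 \<le> c" and c1: "c \<le> 1" using U.ubd_bounds cf2 by auto
  obtain G \<epsilon> where Gfin: "finite G" and Gint: "\<forall>g\<in>G. integrable lebesgue g" and e0: "\<epsilon> > 0"
    and GV: "\<forall>h\<in>Sd. (\<forall>g\<in>G. \<bar>(LINT x|lebesgue. h x * g x) - (LINT x|lebesgue. upper_banach_density f * g x)\<bar> < \<epsilon>) \<longrightarrow> h \<in> V"
    using nbhd[OF assms(2) assms(4)] by auto
  have GPP: "\<forall>g\<in>G. PP c g" using Gint PP_all[OF c0 c1] by blast
  obtain L0 where L0: "\<forall>L\<ge>L0. \<exists>\<delta>>0. \<exists>s>0. \<forall>h::'a\<Rightarrow>real. Hyp c h L \<delta> s \<longrightarrow>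
     (\<forall>g\<in>G. \<bar>(\<integral>x. h x * g x \<partial>lebesgue) - (\<integral>x. c * g x \<partial>lebesgue)\<bar> \<le> \<epsilon>/2)"
    using PP_fin[OF Gfin GPP, of "\<epsilon>/2"] e0 by auto
  define L where "L = max L0 1"
  have L1: "L \<ge> 1" unfolding L_def by simp
  obtain \<delta> s where d0: "\<delta> > 0" and s0: "s > 0" and Hs: "\<forall>h::'a\<Rightarrow>real. Hyp c h L \<delta> s \<longrightarrow>
     (\<forall>g\<in>G. \<bar>(\<integral>x. h x * g x \<partial>lebesgue) - (\<integral>x. c * g x \<partial>lebesgue)\<bar> \<le> \<epsilon>/2)"
  proof -
    have "L0 \<le> L" unfolding L_def by simp
    then have "\<exists>\<delta>>0. \<exists>s>0. \<forall>h::'a\<Rightarrow>real. Hyp c h L \<delta> s \<longrightarrow>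
     (\<forall>g\<in>G. \<bar>(\<integral>x. h x * g x \<partial>lebesgue) - (\<integral>x. c * g x \<partial>lebesgue)\<bar> \<le> \<epsilon>/2)"
      using L0 by blast
    then show ?thesis using that by blast
  qed
  obtain T0 where T00: "T0 > 0" and T0: "\<And>T v. T \<ge> T0 \<Longrightarrow> (LINT x:cube v T|lebesgue. f2 x) \<le> (c + \<delta>) * T ^ ?n"
    using U.upper_ev[OF d0] cf2 by auto
  show ?thesis
    unfolding eventually_at_top_linorder
  proof (rule exI[of _ "max (T0/s) 1"], intro allI impI)
    fix t assume t: "max (T0/s) 1 \<le> t"
    have t0: "t > 0" using t by simp
    have ts: "T0 \<le> t * s" using t s0 by (simp add: pos_divide_le_eq mult.commute)
    define l where "l = t * L"
    have l0: "l > 0" unfolding l_def using t0 L1 by simp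
    define T1 where "T1 = max (2*l) (6 * real ?n * l / \<delta>)"
    obtain T where T: "T \<ge> T1" "T > 0" and "\<exists>z. (c - \<delta>/2) * T ^ ?n < (LINT x:cube z T|lebesgue. f2 x)"
      using U.lower_freq[of "\<delta>/2" T1] d0 cf2 by auto
    then obtain z where z: "(c - \<delta>/2) * T ^ ?n < (LINT x:cube z T|lebesgue. f2 x)" by blast
    have Tl: "2 * l \<le> T" using T unfolding T1_def by simp
    obtain y where y: "(c - \<delta>/2 - 3 * real ?n * l / T) * l ^ ?n \<le> (LINT x:cube y l|lebesgue. f2 x)"
      using U.subcube[OF T(2) l0 Tl, of "c - \<delta>/2" z] z by auto
    have small: "3 * real ?n * l / T \<le> \<delta>/2"
    proof -
      have "6 * real ?n * l / \<delta> \<le> T" using T unfolding T1_def by simp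
      then have "6 * real ?n * l \<le> T * \<delta>" using d0 by (simp add: pos_divide_le_eq)
      then show ?thesis using T(2) by (simp add: divide_le_eq field_simps)
    qed
    have ylow: "(c - \<delta>) * l ^ ?n \<le> (LINT x:cube y l|lebesgue. f2 x)"
    proof -
      have "(c - \<delta>) * l ^ ?n \<le> (c - \<delta>/2 - 3 * real ?n * l / T) * l ^ ?n"
        using small l0 by (intro mult_right_mono) auto
      then show ?thesis using y by linarith
    qed
    define h where "h x = f2 (y + t *\<^sub>R x)" for x
    have hm[measurable]: "h \<in> borel_measurable borel" unfolding h_def by measurable
    have hl[measurable]: "h \<in> borel_measurable lebesgue" using hm by (simp add: measurable_completion)
    have uh: "unitf h" by unfold_locales (auto simp: h_def U.h0 U.h1)
    have tn: "t ^ ?n > 0" using t0 by simp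
    have H: "Hyp c h L \<delta> s"
      unfolding Hyp_def
    proof (intro conjI uh allI impI)
      show "L \<ge> 0" using L1 by simp
      fix y' \<sigma> assume \<sigma>: "s \<le> \<sigma>"
      have "t ^ ?n * (LINT x:cube y' \<sigma>|lebesgue. h x) = (LINT x:cube (y + t *\<^sub>R y') (t*\<sigma>)|lebesgue. f2 x)"
        unfolding h_def by (rule cv_cube[OF f2m t0, symmetric])
      also have "\<dots> \<le> (c + \<delta>) * (t*\<sigma>) ^ ?n"
      proof (rule T0)
        have "t * s \<le> t * \<sigma>" using \<sigma> t0 by simp
        then show "T0 \<le> t * \<sigma>" using ts by linarith
      qed
      also have "\<dots> = t ^ ?n * ((c + \<delta>) * \<sigma> ^ ?n)" by (simp add: power_mult_distrib)
      finally show "(LINT x:cube y' \<sigma>|lebesgue. h x) \<le> (c + \<delta>) * \<sigma> ^ ?n"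
        using tn by simp
    next
      have "t ^ ?n * ((c - \<delta>) * L ^ ?n) = (c - \<delta>) * l ^ ?n" unfolding l_def by (simp add: power_mult_distrib)
      also have "\<dots> \<le> (LINT x:cube y l|lebesgue. f2 x)" by (rule ylow)
      also have "\<dots> = (LINT x:cube (y + t *\<^sub>R 0) (t*L)|lebesgue. f2 x)" unfolding l_def by simp
      also have "\<dots> = t ^ ?n * (LINT x:cube 0 L|lebesgue. h x)"
        unfolding h_def by (rule cv_cube[OF f2m t0])
      finally show "(c - \<delta>) * L ^ ?n \<le> (LINT x:cube 0 L|lebesgue. h x)"
        using tn by simp
    qed
    have hb: "\<forall>g\<in>G. \<bar>(\<integral>x. h x * g x \<partial>lebesgue) - (\<integral>x. c * g x \<partial>lebesgue)\<bar> \<le> \<epsilon>/2"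
      using Hs H by blast
    define k where "k = transl ((1/t) *\<^sub>R y) (dilate t f)"
    have keq: "k = (\<lambda>x. f (y + t *\<^sub>R x))"
      unfolding k_def transl_def dilate_def using t0 by (auto simp: algebra_simps)
    have km[measurable]: "k \<in> borel_measurable lebesgue"
      unfolding keq using measurable_compose[OF affine_meas fm, of y t] by (simp add: o_def)
    have kS: "k \<in> Sd"
      unfolding Sd_def keq using km[unfolded keq] AE_affine[OF _ fae, of t y] t0 by auto
    have kae: "AE x in lebesgue. k x = h x"
      unfolding keq h_def using AE_affine[OF _ ae, of t y] t0 by auto
    have "\<forall>g\<in>G. \<bar>(LINT x|lebesgue. k x * g x) - (LINT x|lebesgue. upper_banach_density f * g x)\<bar> < \<epsilon>"
    proof
      fix g assume g: "g \<in> G"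
      then have gm: "g \<in> borel_measurable lebesgue" using Gint borel_measurable_integrable by blast
      have "(LINT x|lebesgue. k x * g x) = (LINT x|lebesgue. h x * g x)"
        by (rule integral_cong_AE) (use kae km gm hl in \<open>auto\<close>)
      then show "\<bar>(LINT x|lebesgue. k x * g x) - (LINT x|lebesgue. upper_banach_density f * g x)\<bar> < \<epsilon>"
        using hb g e0 unfolding c_def by fastforce
    qed
    then have "k \<in> V" using GV kS by blast
    then show "dilate t f \<in> V" unfolding k_def by (rule T_inv_back[OF assms(3)])
  qed
qed


end
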